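(* Let $S$ be a set of monic $\Omega$-polynomials in $K\langle X;\Omega\rangle$, $>$ a monomial ordering on $\mathfrak{S}(X)$, and $Id(S)$ the ideal generated by $S$. The following are equivalent: (I) $S$ is a Gröbner–Shirshov basis in $K\langle X;\Omega\rangle$. (II) For every nonzero $f\in Id(S)$, $\bar f=u|_{\bar s}$ for some $u\in\mathfrak{S}^\star(X)$ and $s\in S$. (II$'$) Every nonzero $f\in Id(S)$ can be written $f=\alpha_1u_1|_{s_1}+\cdots+\alpha_nu_n|_{s_n}$ with $\alpha_i\in K$, $s_i\in S$, $u_i\in\mathfrak{S}^\star(X)$ and $u_1|_{\overline{s_1}}>u_2|_{\overline{s_2}}>\cdots>u_n|_{\overline{s_n}}$. (III) The set $Irr(S)=\{w\in\mathfrak{S}(X)\mid w\ne u|_{\bar s}\text{ for all }u\in\mathfrak{S}^\star(X),\ s\in S\}$ is (its image is) a $K$-basis of $K\langle X;\Omega|S\rangle=K\langle X;\Omega\rangle/Id(S)$.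
   Context: General setup. $K$ is a commutative ring with unit, $X$ a set, and $\Omega=\bigcup_{n\ge1}\Omega_n$ a set of operation symbols, $\Omega_n$ being the $n$-ary ones. For a set $A$ let $\Omega(A)=\{\delta(u_1,\dots,u_t)\mid t\ge1,\ \delta\in\Omega_t,\ u_i\in A\}$ (formal expressions). For a set $Y$, $S(Y)$ denotes the free semigroup (nonempty words) and $Y^*$ the free monoid on $Y$. Put $\mathfrak{S}_0=S(X)$ and $\mathfrak{S}_n=S(X\cup\Omega(\mathfrak{S}_{n-1}))$ for $n\ge1$; then $\mathfrak{S}_0\subset\mathfrak{S}_1\subset\cdots$ and $\mathfrak{S}(X)=\bigcup_{n\ge0}\mathfrak{S}_n$ (the $\Omega$-words). $K\langle X;\Omega\rangle$ is the free $K$-module with basis $\mathfrak{S}(X)$, with associative multiplication given by concatenation and each $\delta\in\Omega_n$ extended $K$-multilinearly; it is the free associative algebra with multiple linear operators $\Omega$ on $X$; its elements are $\Omega$-polynomials. The prime $\Omega$-words are the elements of $X\cup\Omega(\mathfrak{S}(X))$; each $u\in\mathfrak{S}(X)$ is uniquely a product $u_1\cdots u_n$ of prime $\Omega$-words, and $bre(u)=n$. For a symbol $\star\notin X$, $\mathfrak{S}^\star(X)$ is the set of elements of $\mathfrak{S}(X\cup\{\star\})$ containing exactly one occurrence of $\star$; for $u\in\mathfrak{S}^\star(X)$ and an $\Omega$-polynomial $s$, $u|_s$ denotes the result of replacing $\star$ by $s$ (extended linearly in $s$). A monomial ordering is a well ordering $>$ on $\mathfrak{S}(X)$ such that $w>v$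 implies $u|_w>u|_v$ for all $u\in\mathfrak{S}^\star(X)$. For nonzero $f$, $\bar f$ is its largest $\Omega$-word; $f$ is monic if the coefficient of $\bar f$ is $1$. The ideal $Id(S)$ generated by a set $S$ is the $K$-span of all $u|_s$ with $u\in\mathfrak{S}^\star(X)$, $s\in S$, and $K\langle X;\Omega|S\rangle=K\langle X;\Omega\rangle/Id(S)$. For monic $f,g$: (I) if $w=\bar f a=b\bar g$ for some $a,b\in\mathfrak{S}(X)$ with $bre(w)<bre(\bar f)+bre(\bar g)$, then $(f,g)_w=fa-bg$ is an intersection composition; (II) if $w=\bar f=u|_{\bar g}$ for some $u\in\mathfrak{S}^\star(X)$, then $(f,g)_w=f-u|_g$ is an including composition. For a set $S$ of monic $\Omega$-polynomials, an $\Omega$-word $w$, and $\Omega$-polynomials $p,q$, we write $p\equiv q\ \mathrm{mod}(S,w)$ if $p-q=\sum_i\alpha_iu_i|_{s_i}$ with $\alpha_i\in K$, $u_i\in\mathfrak{S}^\star(X)$, $s_i\in S$ and $u_i|_{\overline{s_i}}<w$ for all $i$. $S$ is a Gröbner–Shirshov basis if every composition $(f,g)_w$ with $f,g\in S$ satisfies $(f,g)_w\equiv0\ \mathrm{mod}(S,w)$. *)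

theory Defs
  imports Main "HOL-Library.Poly_Mapping"
begin

text \<open>Prime Omega-words: a letter of X (here the type 'x), or an operation symbol
  applied to a list of Omega-words (each an nonempty list of prime words).
  Omega is given by a type 'o together with an arity function ar; the symbols of
  Omega_n are those d with ar d = n, and only symbols with ar d >= 1 occur.\<close>

datatype ('x, 'o) prm = Var 'x | Op 'o "('x, 'o) prm list list"

type_synonym ('x, 'o) oword = "('x, 'o) prm list"

fun valid_prm :: "('o \<Rightarrow> nat) \<Rightarrow> ('x, 'o) prm \<Rightarrow> bool" where
  "valid_prm ar (Var x) = True"
| "valid_prm ar (Op d uss) =
     (1 \<le> ar d \<and> length uss = ar d \<and>
      (\<forall>us \<in> set uss. us \<noteq> [] \<and> (\<forall>p \<in> set us. valid_prm ar p)))"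

definition oword :: "('o \<Rightarrow> nat) \<Rightarrow> ('x, 'o) oword \<Rightarrow> bool" where
  "oword ar w \<longleftrightarrow> w \<noteq> [] \<and> (\<forall>p \<in> set w. valid_prm ar p)"

abbreviation bre :: "('x, 'o) oword \<Rightarrow> nat" where
  "bre w \<equiv> length w"

text \<open>Starred words: Omega-words over X \<union> {star}, encoded as 'x option with
  None = star, containing exactly one occurrence of star.\<close>
fun stars_prm :: "('x option, 'o) prm \<Rightarrow> nat" where
  "stars_prm (Var None) = 1"
| "stars_prm (Var (Some x)) = 0"
| "stars_prm (Op d uss) = sum_list (map (\<lambda>us. sum_list (map stars_prm us)) uss)"

definition star_word :: "('o \<Rightarrow> nat) \<Rightarrow> ('x option, 'o) oword \<Rightarrow> bool" where
  "star_word ar u \<longleftrightarrow> oword ar u \<and> sum_list (map stars_prm u) = 1"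

fun subst_prm :: "('x option, 'o) prm \<Rightarrow> ('x, 'o) oword \<Rightarrow> ('x, 'o) oword" where
  "subst_prm (Var None) w = w"
| "subst_prm (Var (Some x)) w = [Var x]"
| "subst_prm (Op d uss) w = [Op d (map (\<lambda>us. concat (map (\<lambda>p. subst_prm p w) us)) uss)]"

definition subst :: "('x option, 'o) oword \<Rightarrow> ('x, 'o) oword \<Rightarrow> ('x, 'o) oword" where
  "subst u w = concat (map (\<lambda>p. subst_prm p w) u)"

type_synonym ('x, 'o, 'k) opoly = "('x, 'o) oword \<Rightarrow>\<^sub>0 'k"

definition opoly :: "('o \<Rightarrow> nat) \<Rightarrow> ('x, 'o, 'k::zero) opoly \<Rightarrow> bool" where
  "opoly ar f \<longleftrightarrow> (\<forall>w \<in> Poly_Mapping.keys f. oword ar w)"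

definition scale :: "'k::comm_ring_1 \<Rightarrow> ('x, 'o, 'k) opoly \<Rightarrow> ('x, 'o, 'k) opoly" where
  "scale c f = (\<Sum>w \<in> Poly_Mapping.keys f. Poly_Mapping.single w (c * Poly_Mapping.lookup f w))"

definition subst_poly :: "('x option, 'o) oword \<Rightarrow> ('x, 'o, 'k::comm_ring_1) opoly \<Rightarrow> ('x, 'o, 'k) opoly" where
  "subst_poly u f = (\<Sum>w \<in> Poly_Mapping.keys f. Poly_Mapping.single (subst u w) (Poly_Mapping.lookup f w))"

definition rmul :: "('x, 'o, 'k::comm_ring_1) opoly \<Rightarrow> ('x, 'o) oword \<Rightarrow> ('x, 'o, 'k) opoly" where
  "rmul f a = (\<Sum>w \<in> Poly_Mapping.keys f. Poly_Mapping.single (w @ a) (Poly_Mapping.lookup f w))"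

definition lmul :: "('x, 'o) oword \<Rightarrow> ('x, 'o, 'k::comm_ring_1) opoly \<Rightarrow> ('x, 'o, 'k) opoly" where
  "lmul b f = (\<Sum>w \<in> Poly_Mapping.keys f. Poly_Mapping.single (b @ w) (Poly_Mapping.lookup f w))"

inductive_set kspan :: "('x, 'o, 'k::comm_ring_1) opoly set \<Rightarrow> ('x, 'o, 'k) opoly set"
  for A where
  zero: "0 \<in> kspan A"
| add: "a \<in> A \<Longrightarrow> p \<in> kspan A \<Longrightarrow> scale c a + p \<in> kspan A"

text \<open>lt v w means v < w (i.e. w > v). A monomial ordering is a well ordering
  on the set of Omega-words compatible with substitution into starred words.\<close>
definition monomial_ordering ::
  "('o \<Rightarrow> nat) \<Rightarrow> (('x, 'o) oword \<Rightarrow> ('x, 'o) oword \<Rightarrow> bool) \<Rightarrow> bool" where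
  "monomial_ordering ar lt \<longleftrightarrow>
     (\<forall>w. oword ar w \<longrightarrow> \<not> lt w w) \<and>
     (\<forall>u v w. oword ar u \<and> oword ar v \<and> oword ar w \<and> lt u v \<and> lt v w \<longrightarrow> lt u w) \<and>
     (\<forall>v w. oword ar v \<and> oword ar w \<longrightarrow> lt v w \<or> v = w \<or> lt w v) \<and>
     wf {(v, w). oword ar v \<and> oword ar w \<and> lt v w} \<and>
     (\<forall>u v w. star_word ar u \<and> oword ar v \<and> oword ar w \<and> lt v w
        \<longrightarrow> lt (subst u v) (subst u w))"

definition lead :: "(('x, 'o) oword \<Rightarrow> ('x, 'o) oword \<Rightarrow> bool) \<Rightarrow> ('x, 'o, 'k::zero) opoly \<Rightarrow> ('x, 'o) oword" where
  "lead lt f = (THE w. w \<in> Poly_Mapping.keys f \<and> (\<forall>v \<in> Poly_Mapping.keys f. v \<noteq> w \<longrightarrow> lt v w))"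

definition monic :: "(('x, 'o) oword \<Rightarrow> ('x, 'o) oword \<Rightarrow> bool) \<Rightarrow> ('x, 'o, 'k::{zero,one}) opoly \<Rightarrow> bool" where
  "monic lt f \<longleftrightarrow> f \<noteq> 0 \<and> Poly_Mapping.lookup f (lead lt f) = 1"

definition Id :: "('o \<Rightarrow> nat) \<Rightarrow> ('x, 'o, 'k::comm_ring_1) opoly set \<Rightarrow> ('x, 'o, 'k) opoly set" where
  "Id ar S = kspan {subst_poly u s | u s. star_word ar u \<and> s \<in> S}"

definition congr_mod ::
  "('o \<Rightarrow> nat) \<Rightarrow> (('x, 'o) oword \<Rightarrow> ('x, 'o) oword \<Rightarrow> bool) \<Rightarrow> ('x, 'o, 'k::comm_ring_1) opoly set
   \<Rightarrow> ('x, 'o) oword \<Rightarrow> ('x, 'o, 'k) opoly \<Rightarrow> ('x, 'o, 'k) opoly \<Rightarrow> bool" where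
  "congr_mod ar lt S w p q \<longleftrightarrow>
     p - q \<in> kspan {subst_poly u s | u s. star_word ar u \<and> s \<in> S \<and> lt (subst u (lead lt s)) w}"

text \<open>Every intersection composition and every including composition of elements of S
  is trivial modulo (S, w).\<close>
definition GSB ::
  "('o \<Rightarrow> nat) \<Rightarrow> (('x, 'o) oword \<Rightarrow> ('x, 'o) oword \<Rightarrow> bool) \<Rightarrow> ('x, 'o, 'k::comm_ring_1) opoly set \<Rightarrow> bool" where
  "GSB ar lt S \<longleftrightarrow>
     (\<forall>f \<in> S. \<forall>g \<in> S.
        (\<forall>w a b. oword ar a \<and> oword ar b \<and> w = lead lt f @ a \<and> w = b @ lead lt g \<and>
                 bre w < bre (lead lt f) + bre (lead lt g)
           \<longrightarrow> congr_mod ar lt S w (rmul f a - lmul b g) 0) \<and>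
        (\<forall>u. star_word ar u \<and> lead lt f = subst u (lead lt g)
           \<longrightarrow> congr_mod ar lt S (lead lt f) (f - subst_poly u g) 0))"

definition Irr ::
  "('o \<Rightarrow> nat) \<Rightarrow> (('x, 'o) oword \<Rightarrow> ('x, 'o) oword \<Rightarrow> bool) \<Rightarrow> ('x, 'o, 'k::comm_ring_1) opoly set
   \<Rightarrow> ('x, 'o) oword set" where
  "Irr ar lt S = {w. oword ar w \<and> (\<forall>u s. star_word ar u \<and> s \<in> S \<longrightarrow> w \<noteq> subst u (lead lt s))}"

end

theory Submission
  imports Defs
begin

datatype ('x,'o) ctx = Hole "('x,'o) prm list" "('x,'o) prm list"
  | In "('x,'o) prm list" 'o "('x,'o) prm list list" "('x,'o) ctx" "('x,'o) prm list list" "('x,'o) prm list"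

primrec fill :: "('x,'o) ctx \<Rightarrow> ('x,'o) oword \<Rightarrow> ('x,'o) oword" where
  "fill (Hole L R) w = L @ w @ R"
| "fill (In L d A c B R) w = L @ [Op d (A @ [fill c w] @ B)] @ R"

definition vl :: "('o \<Rightarrow> nat) \<Rightarrow> ('x,'o) prm list \<Rightarrow> bool" where
  "vl ar L \<longleftrightarrow> (\<forall>p\<in>set L. valid_prm ar p)"

primrec vctx :: "('o \<Rightarrow> nat) \<Rightarrow> ('x,'o) ctx \<Rightarrow> bool" where
  "vctx ar (Hole L R) = (vl ar L \<and> vl ar R)"
| "vctx ar (In L d A c B R) = (vl ar L \<and> vl ar R \<and> 1 \<le> ar d \<and> length A + 1 + length B = ar d
     \<and> (\<forall>us\<in>set A \<union> set B. us \<noteq> [] \<and> vl ar us) \<and> vctx ar c)"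

primrec cmp :: "('x,'o) ctx \<Rightarrow> ('x,'o) ctx \<Rightarrow> ('x,'o) ctx" where
  "cmp (Hole L R) c' = (case c' of Hole L' R' \<Rightarrow> Hole (L@L') (R'@R)
       | In L' d A c B R' \<Rightarrow> In (L@L') d A c B (R'@R))"
| "cmp (In L d A c B R) c' = In L d A (cmp c c') B R"

lemma fill_cmp[simp]: "fill (cmp c c') w = fill c (fill c' w)"
  by (induction c) (auto split: ctx.split)

declare cmp.simps[simp del]

lemma vl_append[simp]: "vl ar (xs @ ys) = (vl ar xs \<and> vl ar ys)"
  by (auto simp: vl_def)

lemma vctx_cmp: "vctx ar c \<Longrightarrow> vctx ar c' \<Longrightarrow> vctx ar (cmp c c')"
  by (induction c) (auto split: ctx.split simp: cmp.simps)


lemma oword_vl: "oword ar w = (w \<noteq> [] \<and> vl ar w)"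
  by (simp add: oword_def vl_def)

lemma fill_oword: "vctx ar c \<Longrightarrow> oword ar w \<Longrightarrow> oword ar (fill c w)"
  by (induction c) (auto simp: oword_vl vl_def)

lemma fill_inj: "fill c v = fill c w \<Longrightarrow> v = w"
  by (induction c) auto

lemma concat_single_map: "(\<And>p. p \<in> set xs \<Longrightarrow> f p = [g p]) \<Longrightarrow> concat (map f xs) = map g xs"
  by (induction xs) auto

lemma concat_single: "(\<And>p. p \<in> set xs \<Longrightarrow> f p = [p]) \<Longrightarrow> concat (map f xs) = xs"
  by (induction xs) auto

lemma subst_lift: "subst_prm (map_prm Some (\<lambda>a. a) p) w = [p]"
proof (induction p)
  case (Var x) then show ?case by simp
next
  case (Op d uss)
  then show ?case by (auto intro!: map_idI concat_single)
qed

abbreviation lift :: "('x,'o) prm \<Rightarrow> ('x option,'o) prm" where "lift \<equiv> map_prm Some (\<lambda>a. a)"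
abbreviation unst :: "('x option,'o) prm \<Rightarrow> ('x,'o) prm" where "unst \<equiv> map_prm the (\<lambda>a. a)"

lemma stars_lift[simp]: "stars_prm (lift p) = 0"
  by (induction p) (auto intro!: sum_list_eq_0_iff[THEN iffD2])

lemma valid_lift[simp]: "valid_prm ar (lift p) = valid_prm ar p"
  by (induction p) auto

lemma subst_unst: "stars_prm p = 0 \<Longrightarrow> subst_prm p w = [unst p]"
proof (induction p)
  case (Var x) then show ?case by (cases x) auto
next
  case (Op d uss)
  then show ?case by (auto intro!: map_cong concat_single_map)
qed

lemma valid_unst[simp]: "valid_prm ar (unst p) = valid_prm ar p"
  by (induction p) auto

lemma subst_append[simp]: "subst (xs @ ys) w = subst xs w @ subst ys w"
  by (simp add: subst_def)
lemma subst_Cons[simp]: "subst (p # ys) w = subst_prm p w @ subst ys w"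
  by (simp add: subst_def)
lemma subst_Nil[simp]: "subst [] w = []"
  by (simp add: subst_def)

lemma subst_prm_Op: "subst_prm (Op d uss) w = [Op d (map (\<lambda>us. subst us w) uss)]"
  by (simp add: subst_def)

declare subst_prm.simps(3)[simp del]
declare subst_prm_Op[simp]

lemma subst_unst_list: "(\<forall>p\<in>set xs. stars_prm p = 0) \<Longrightarrow> subst xs w = map unst xs"
  by (induction xs) (auto simp: subst_unst)

lemma subst_lift_list[simp]: "subst (map lift xs) w = xs"
proof (induction xs)
  case (Cons a xs)
  have "subst_prm (lift a) w = [a]" by (rule subst_lift)
  then show ?case using Cons by simp
qed simp

lemma split_one: "sum_list (map f xs) = (1::nat) \<Longrightarrow>
   \<exists>A y B. xs = A @ [y] @ B \<and> f y = 1 \<and> (\<forall>a\<in>set A. f a = 0) \<and> (\<forall>b\<in>set B. f b = 0)"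
proof (induction xs)
  case Nil then show ?case by simp
next
  case (Cons x xs)
  show ?case
  proof (cases "f x = 0")
    case True
    then obtain A y B where "xs = A @ [y] @ B \<and> f y = 1 \<and> (\<forall>a\<in>set A. f a = 0) \<and> (\<forall>b\<in>set B. f b = 0)"
      using Cons by auto
    then show ?thesis using True by (intro exI[of _ "x#A"]) auto
  next
    case False
    have "f x + sum_list (map f xs) = 1" using Cons.prems by simp
    then have fx: "f x = 1" "sum_list (map f xs) = 0" using False by linarith+
    then have xs0: "\<forall>b\<in>set xs. f b = 0" by (simp add: sum_list_eq_0_iff)
    show ?thesis by (rule exI[of _ "[]"], rule exI[of _ x], rule exI[of _ xs]) (use fx xs0 in auto)
  qed
qed

lemma prm_ctx: "stars_prm p = 1 \<Longrightarrow> valid_prm ar p \<Longrightarrow> \<exists>c. vctx ar c \<and> (\<forall>w. subst_prm p w = fill c w)"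
proof (induction p)
  case (Var x)
  then show ?case by (cases x) (auto intro!: exI[of _ "Hole [] []"] simp: vl_def)
next
  case (Op d uss)
  have "sum_list (map (\<lambda>us. sum_list (map stars_prm us)) uss) = 1" using Op.prems by simp
  then obtain A us B where uss: "uss = A @ [us] @ B" and us1: "sum_list (map stars_prm us) = 1"
    and A0: "\<forall>a\<in>set A. sum_list (map stars_prm a) = 0" and B0: "\<forall>a\<in>set B. sum_list (map stars_prm a) = 0"
    using split_one[of "\<lambda>us. sum_list (map stars_prm us)"] by blast
  obtain A' p B' where us: "us = A' @ [p] @ B'" and p1: "stars_prm p = 1"
    and A'0: "\<forall>a\<in>set A'. stars_prm a = 0" and B'0: "\<forall>a\<in>set B'. stars_prm a = 0"
    using split_one[OF us1] by blast
  have vus: "us \<noteq> [] \<and> (\<forall>q\<in>set us. valid_prm ar q)" using Op.prems(2) uss by auto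
  obtain c where c: "vctx ar c" "\<forall>w. subst_prm p w = fill c w"
    using Op.IH[of us p] p1 vus uss us by auto
  define cc where "cc = In [] d (map (map unst) A) (cmp (Hole (map unst A') (map unst B')) c) (map (map unst) B) []"
  have "vctx ar cc" unfolding cc_def using Op.prems(2) uss us c(1) vus
    by (auto intro!: vctx_cmp simp: vl_def; meson Un_iff)
  moreover have "\<forall>w. subst_prm (Op d uss) w = fill cc w"
  proof
    fix w
    have "subst a w = map unst a" if "a \<in> set A \<union> set B" for a
      using that A0 B0 by (auto intro!: subst_unst_list)
    then show "subst_prm (Op d uss) w = fill cc w"
      unfolding cc_def subst_prm_Op using uss us c A'0 B'0
      by (auto simp: subst_unst_list)
  qed
  ultimately show ?case by blast
qed

lemma star_ctx: "star_word ar u \<Longrightarrow> \<exists>c. vctx ar c \<and> subst u = fill c"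
proof -
  assume su: "star_word ar u"
  then obtain A p B where u: "u = A @ [p] @ B" and p1: "stars_prm p = 1"
    and A0: "\<forall>a\<in>set A. stars_prm a = 0" and B0: "\<forall>a\<in>set B. stars_prm a = 0"
    using split_one[of stars_prm u] by (auto simp: star_word_def)
  have v: "\<forall>q\<in>set u. valid_prm ar q" using su by (auto simp: star_word_def oword_def)
  obtain c where c: "vctx ar c" "\<forall>w. subst_prm p w = fill c w"
    using prm_ctx[OF p1, of ar] v u by auto
  show ?thesis
    using c u v A0 B0
    by (intro exI[of _ "cmp (Hole (map unst A) (map unst B)) c"])
       (auto intro!: vctx_cmp simp: vl_def valid_unst subst_unst_list)
qed

lemma ctx_star: "vctx ar c \<Longrightarrow> \<exists>u. star_word ar u \<and> subst u = fill c"
proof (induction c)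
  case (Hole L R)
  then show ?case
    by (intro exI[of _ "map lift L @ [Var None] @ map lift R"])
       (auto simp: star_word_def oword_def vl_def sum_list_eq_0_iff)
next
  case (In L d A c B R)
  then obtain uc where uc: "star_word ar uc" "subst uc = fill c" by auto
  define u where "u = map lift L @ [Op d (map (map lift) A @ [uc] @ map (map lift) B)] @ map lift R"
  have "star_word ar u" using In.prems uc(1)
    by (auto simp: u_def star_word_def oword_def vl_def sum_list_eq_0_iff; meson Un_iff)
  moreover have "subst u = fill (In L d A c B R)"
    using uc(2) by (auto simp: u_def fun_eq_iff comp_def)
  ultimately show ?case by blast
qed


definition mapF :: "(('x,'o) oword \<Rightarrow> ('x,'o) oword) \<Rightarrow> ('x,'o,'k::comm_ring_1) opoly \<Rightarrow> ('x,'o,'k) opoly" where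
  "mapF G f = (\<Sum>w\<in>Poly_Mapping.keys f. Poly_Mapping.single (G w) (Poly_Mapping.lookup f w))"

lemma subst_poly_mapF: "subst_poly u f = mapF (subst u) f"
  by (simp add: subst_poly_def mapF_def)
lemma rmul_mapF: "rmul f a = mapF (\<lambda>w. w @ a) f"
  by (simp add: rmul_def mapF_def)
lemma lmul_mapF: "lmul b f = mapF (\<lambda>w. b @ w) f"
  by (simp add: lmul_def mapF_def)

lemma lookup_scale[simp]: "Poly_Mapping.lookup (scale c f) k = c * Poly_Mapping.lookup f k"
  by (auto simp: scale_def lookup_sum lookup_single when_def in_keys_iff)

lemma scale_add: "scale c (f + g) = scale c f + scale c g"
  by (rule poly_mapping_eqI) (simp add: lookup_add algebra_simps)
lemma scale_add_left: "scale (c + d) f = scale c f + scale d f"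
  by (rule poly_mapping_eqI) (simp add: lookup_add algebra_simps)
lemma scale_scale: "scale c (scale d f) = scale (c * d) f"
  by (rule poly_mapping_eqI) (simp add: algebra_simps)
lemma scale_one[simp]: "scale 1 f = f"
  by (rule poly_mapping_eqI) simp
lemma scale_zero[simp]: "scale c 0 = 0"
  by (rule poly_mapping_eqI) simp
lemma scale_zero_left[simp]: "scale 0 f = 0"
  by (rule poly_mapping_eqI) simp
lemma scale_minus1: "scale (-1) f = - f"
  by (rule poly_mapping_eqI) simp
lemma scale_diff: "scale c (f - g) = scale c f - scale c g"
  by (rule poly_mapping_eqI) (simp add: lookup_minus algebra_simps)
lemma scale_single: "scale c (Poly_Mapping.single k a) = Poly_Mapping.single k (c * a)"
  by (rule poly_mapping_eqI) (simp add: lookup_single when_def)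
lemma scale_sum: "scale c (sum h I) = (\<Sum>i\<in>I. scale c (h i))"
  by (induction I rule: infinite_finite_induct) (auto simp: scale_add)

lemma mapF_superset:
  assumes "finite K" "Poly_Mapping.keys f \<subseteq> K"
  shows "mapF G f = (\<Sum>w\<in>K. Poly_Mapping.single (G w) (Poly_Mapping.lookup f w))"
  unfolding mapF_def
  by (rule sum.mono_neutral_left) (use assms in \<open>auto simp: in_keys_iff\<close>)

lemma mapF_add: "mapF G (f + g) = mapF G f + mapF G g"
proof -
  let ?K = "Poly_Mapping.keys f \<union> Poly_Mapping.keys g"
  have "mapF G (f + g) = (\<Sum>w\<in>?K. Poly_Mapping.single (G w) (Poly_Mapping.lookup (f+g) w))"
    by (rule mapF_superset) (use keys_add[of f g] in auto)
  also have "\<dots> = (\<Sum>w\<in>?K. Poly_Mapping.single (G w) (Poly_Mapping.lookup f w))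
     + (\<Sum>w\<in>?K. Poly_Mapping.single (G w) (Poly_Mapping.lookup g w))"
    by (simp add: lookup_add single_add sum.distrib)
  also have "\<dots> = mapF G f + mapF G g"
    by (simp add: mapF_superset[symmetric])
  finally show ?thesis .
qed

lemma mapF_zero[simp]: "mapF G 0 = 0"
  by (simp add: mapF_def)

lemma mapF_scale: "mapF G (scale c f) = scale c (mapF G f)"
proof -
  have "mapF G (scale c f) = (\<Sum>w\<in>Poly_Mapping.keys f. Poly_Mapping.single (G w) (Poly_Mapping.lookup (scale c f) w))"
    by (rule mapF_superset) (auto simp: in_keys_iff)
  then show ?thesis by (simp add: mapF_def scale_sum scale_single)
qed

lemma mapF_uminus: "mapF G (- f) = - mapF G f"
  using mapF_scale[of G "-1" f] by (simp add: scale_minus1)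

lemma mapF_diff: "mapF G (f - g) = mapF G f - mapF G g"
  using mapF_add[of G f "-g"] by (simp add: mapF_uminus)

lemma mapF_sum: "mapF G (sum h I) = (\<Sum>i\<in>I. mapF G (h i))"
  by (induction I rule: infinite_finite_induct) (auto simp: mapF_add)

lemma mapF_single: "mapF G (Poly_Mapping.single v c) = Poly_Mapping.single (G v) c"
  by (simp add: mapF_def)

lemma mapF_comp: "mapF G1 (mapF G2 f) = mapF (G1 \<circ> G2) f"
proof -
  have "mapF G1 (mapF G2 f) = (\<Sum>w\<in>Poly_Mapping.keys f. mapF G1 (Poly_Mapping.single (G2 w) (Poly_Mapping.lookup f w)))"
    by (simp only: mapF_def[of G2] mapF_sum)
  also have "\<dots> = (\<Sum>w\<in>Poly_Mapping.keys f. Poly_Mapping.single (G1 (G2 w)) (Poly_Mapping.lookup f w))"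
    by (simp only: mapF_single)
  finally show ?thesis by (simp add: mapF_def)
qed

lemma lookup_mapF_inj:
  assumes "inj G"
  shows "Poly_Mapping.lookup (mapF G f) (G w) = Poly_Mapping.lookup f w"
proof -
  have "Poly_Mapping.lookup (mapF G f) (G w) = (\<Sum>v\<in>Poly_Mapping.keys f. (Poly_Mapping.lookup f v when v = w))"
    unfolding mapF_def lookup_sum lookup_single using assms
    by (intro sum.cong) (auto simp: when_def inj_eq)
  also have "\<dots> = Poly_Mapping.lookup f w"
    by (auto simp: when_def in_keys_iff)
  finally show ?thesis .
qed

lemma keys_mapF_sub: "Poly_Mapping.keys (mapF G f) \<subseteq> G ` Poly_Mapping.keys f"
proof
  fix k assume "k \<in> Poly_Mapping.keys (mapF G f)"
  then have "(\<Sum>v\<in>Poly_Mapping.keys f. (Poly_Mapping.lookup f v when G v = k)) \<noteq> 0"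
    by (simp add: mapF_def lookup_sum lookup_single in_keys_iff)
  then obtain v where "v \<in> Poly_Mapping.keys f" "G v = k"
    by (metis (mono_tags, lifting) sum.neutral when_def)
  then show "k \<in> G ` Poly_Mapping.keys f" by blast
qed

lemma keys_mapF_inj: "inj G \<Longrightarrow> Poly_Mapping.keys (mapF G f) = G ` Poly_Mapping.keys f"
  using keys_mapF_sub[of G f] by (auto simp: in_keys_iff lookup_mapF_inj)

lemma kspan_add: "p \<in> kspan A \<Longrightarrow> q \<in> kspan A \<Longrightarrow> p + q \<in> kspan A"
  by (induction p rule: kspan.induct) (auto simp: add.assoc intro: kspan.add)

lemma kspan_scale: "p \<in> kspan A \<Longrightarrow> scale c p \<in> kspan A"
  by (induction p rule: kspan.induct) (auto simp: scale_add scale_scale intro: kspan.add kspan.zero)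

lemma kspan_gen: "a \<in> A \<Longrightarrow> a \<in> kspan A"
  using kspan.add[OF _ kspan.zero, of a A 1] by simp

lemma kspan_uminus: "p \<in> kspan A \<Longrightarrow> - p \<in> kspan A"
  using kspan_scale[of p A "-1"] by (simp add: scale_minus1)

lemma kspan_diff: "p \<in> kspan A \<Longrightarrow> q \<in> kspan A \<Longrightarrow> p - q \<in> kspan A"
  using kspan_add[of p A "-q"] kspan_uminus[of q A] by simp

lemma kspan_mono: "p \<in> kspan A \<Longrightarrow> A \<subseteq> B \<Longrightarrow> p \<in> kspan B"
  by (induction p rule: kspan.induct) (auto intro: kspan.add kspan.zero)

lemma kspan_sum: "(\<And>i. i \<in> I \<Longrightarrow> h i \<in> kspan A) \<Longrightarrow> sum h I \<in> kspan A"
  by (induction I rule: infinite_finite_induct) (auto intro: kspan_add kspan.zero)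

lemma kspan_sgen: "a \<in> A \<Longrightarrow> scale c a \<in> kspan A"
  by (intro kspan_scale kspan_gen)

lemma kspan_mapF: "p \<in> kspan A \<Longrightarrow> (\<And>a. a \<in> A \<Longrightarrow> mapF G a \<in> kspan B) \<Longrightarrow> mapF G p \<in> kspan B"
  by (induction p rule: kspan.induct) (auto simp: mapF_add mapF_scale intro: kspan_add kspan_scale kspan.zero)

lemma kspan_finite: "p \<in> kspan A \<Longrightarrow> \<exists>B. B \<subseteq> A \<and> finite B \<and> p \<in> kspan B"
proof (induction p rule: kspan.induct)
  case zero then show ?case by (auto intro: kspan.zero)
next
  case (add a p c)
  then obtain B where "B \<subseteq> A" "finite B" "p \<in> kspan B" by auto
  then show ?case using add
    by (intro exI[of _ "insert a B"]) (auto intro: kspan.add kspan_mono[of _ B "insert a B"])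
qed

lemma keys_scale_sub: "Poly_Mapping.keys (scale c f) \<subseteq> Poly_Mapping.keys f"
  by (auto simp: in_keys_iff)

lemma kspan_keys: "p \<in> kspan A \<Longrightarrow> (\<And>a k. a \<in> A \<Longrightarrow> k \<in> Poly_Mapping.keys a \<Longrightarrow> P k) \<Longrightarrow> k \<in> Poly_Mapping.keys p \<Longrightarrow> P k"
proof (induction p arbitrary: k rule: kspan.induct)
  case zero then show ?case by simp
next
  case (add a p c)
  then show ?case using keys_add[of "scale c a" p] keys_scale_sub[of c a] by blast
qed


locale ordl =
  fixes ar :: "'o \<Rightarrow> nat" and lt :: "('x,'o) oword \<Rightarrow> ('x,'o) oword \<Rightarrow> bool"
  assumes mo: "monomial_ordering ar lt"
begin

lemma mo': "(\<forall>w. oword ar w \<longrightarrow> \<not> lt w w) \<and>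
  (\<forall>u v w. oword ar u \<and> oword ar v \<and> oword ar w \<and> lt u v \<and> lt v w \<longrightarrow> lt u w) \<and>
  (\<forall>v w. oword ar v \<and> oword ar w \<longrightarrow> lt v w \<or> v = w \<or> lt w v) \<and>
  wf {(v, w). oword ar v \<and> oword ar w \<and> lt v w} \<and>
  (\<forall>u v w. star_word ar u \<and> oword ar v \<and> oword ar w \<and> lt v w \<longrightarrow> lt (subst u v) (subst u w))"
  using mo unfolding monomial_ordering_def .

lemmas mo_parts = mo'[THEN conjunct1] mo'[THEN conjunct2, THEN conjunct1]
  mo'[THEN conjunct2, THEN conjunct2, THEN conjunct1]
  mo'[THEN conjunct2, THEN conjunct2, THEN conjunct2, THEN conjunct1]
  mo'[THEN conjunct2, THEN conjunct2, THEN conjunct2, THEN conjunct2]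

lemma irr: "oword ar w \<Longrightarrow> \<not> lt w w"
  using mo_parts(1) by blast
lemma trans: "oword ar u \<Longrightarrow> oword ar v \<Longrightarrow> oword ar w \<Longrightarrow> lt u v \<Longrightarrow> lt v w \<Longrightarrow> lt u w"
  using mo_parts(2) by blast
lemma total: "oword ar v \<Longrightarrow> oword ar w \<Longrightarrow> lt v w \<or> v = w \<or> lt w v"
  using mo_parts(3) by blast
lemma wfo: "wf {(v, w). oword ar v \<and> oword ar w \<and> lt v w}"
  by (rule mo_parts(4))
lemma star_mono: "star_word ar u \<Longrightarrow> oword ar v \<Longrightarrow> oword ar w \<Longrightarrow> lt v w \<Longrightarrow> lt (subst u v) (subst u w)"
  using mo_parts(5) by blast
lemma asym: "oword ar v \<Longrightarrow> oword ar w \<Longrightarrow> lt v w \<Longrightarrow> \<not> lt w v"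
  using trans[of v w v] irr[of v] by blast

lemma ctx_mono: "vctx ar c \<Longrightarrow> oword ar v \<Longrightarrow> oword ar w \<Longrightarrow> lt v w \<Longrightarrow> lt (fill c v) (fill c w)"
proof -
  assume a: "vctx ar c" "oword ar v" "oword ar w" "lt v w"
  obtain u where "star_word ar u" "subst u = fill c" using ctx_star[OF a(1)] by blast
  then show ?thesis using star_mono[of u v w] a by metis
qed

lemma wf_induct_ow:
  assumes "oword ar W" "\<And>W. oword ar W \<Longrightarrow> (\<And>V. oword ar V \<Longrightarrow> lt V W \<Longrightarrow> P V) \<Longrightarrow> P W"
  shows "P W"
proof -
  have "oword ar W \<longrightarrow> P W"
  proof (rule wf_induct[OF wfo, of "\<lambda>W. oword ar W \<longrightarrow> P W"], rule impI)
    fix x assume ih: "\<forall>y. (y, x) \<in> {(v, w). oword ar v \<and> oword ar w \<and> lt v w} \<longrightarrow> oword ar y \<longrightarrow> P y"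
      and ox: "oword ar x"
    show "P x" by (rule assms(2)[OF ox]) (use ih ox in blast)
  qed
  then show ?thesis using assms(1) by blast
qed

lemma lead_eq:
  assumes "opoly ar f" "k \<in> Poly_Mapping.keys f" "\<forall>v\<in>Poly_Mapping.keys f. v \<noteq> k \<longrightarrow> lt v k"
  shows "lead lt f = k"
  unfolding lead_def
proof (rule the_equality)
  show "k \<in> Poly_Mapping.keys f \<and> (\<forall>v\<in>Poly_Mapping.keys f. v \<noteq> k \<longrightarrow> lt v k)" using assms by blast
next
  fix w assume w: "w \<in> Poly_Mapping.keys f \<and> (\<forall>v\<in>Poly_Mapping.keys f. v \<noteq> w \<longrightarrow> lt v w)"
  show "w = k"
  proof (rule ccontr)
    assume "w \<noteq> k"
    then have "lt w k" "lt k w" using w assms by auto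
    moreover have "oword ar w" "oword ar k" using assms w by (auto simp: opoly_def)
    ultimately show False using asym by blast
  qed
qed

lemma max_exists: "finite K \<Longrightarrow> K \<noteq> {} \<Longrightarrow> (\<forall>k\<in>K. oword ar k) \<Longrightarrow> \<exists>m\<in>K. \<forall>v\<in>K. v \<noteq> m \<longrightarrow> lt v m"
proof (induction K rule: finite_ne_induct)
  case (singleton x) then show ?case by auto
next
  case (insert x F)
  then obtain m where m: "m \<in> F" "\<forall>v\<in>F. v \<noteq> m \<longrightarrow> lt v m" by auto
  have ow: "oword ar x" "oword ar m" using insert m by auto
  show ?case
  proof (cases "lt x m")
    case True then show ?thesis using m by auto
  next
    case False
    then have "lt m x" using total[OF ow] insert m by auto
    have "\<forall>v\<in>insert x F. v \<noteq> x \<longrightarrow> lt v x"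
    proof (intro ballI impI)
      fix v assume v: "v \<in> insert x F" "v \<noteq> x"
      then have vF: "v \<in> F" by simp
      show "lt v x"
      proof (cases "v = m")
        case True then show ?thesis using \<open>lt m x\<close> by simp
      next
        case False
        then have "lt v m" using m vF by blast
        moreover have "oword ar v" using vF insert.prems by blast
        ultimately show ?thesis using trans[of v m x] ow \<open>lt m x\<close> by blast
      qed
    qed
    then show ?thesis by blast
  qed
qed

lemma lead_props:
  assumes "opoly ar f" "f \<noteq> 0"
  shows "lead lt f \<in> Poly_Mapping.keys f" "\<And>v. v \<in> Poly_Mapping.keys f \<Longrightarrow> v \<noteq> lead lt f \<Longrightarrow> lt v (lead lt f)"
proof -
  have "Poly_Mapping.keys f \<noteq> {}" using assms(2) by (metis keys_eq_empty)
  then obtain m where m: "m \<in> Poly_Mapping.keys f" "\<forall>v\<in>Poly_Mapping.keys f. v \<noteq> m \<longrightarrow> lt v m"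
    using max_exists[of "Poly_Mapping.keys f"] assms(1) by (auto simp: opoly_def)
  then have "lead lt f = m" using lead_eq assms by blast
  then show "lead lt f \<in> Poly_Mapping.keys f" "\<And>v. v \<in> Poly_Mapping.keys f \<Longrightarrow> v \<noteq> lead lt f \<Longrightarrow> lt v (lead lt f)"
    using m by auto
qed

lemma lead_oword: "opoly ar f \<Longrightarrow> f \<noteq> 0 \<Longrightarrow> oword ar (lead lt f)"
  using lead_props(1) by (auto simp: opoly_def)

end

locale gsl = ordl ar lt for ar :: "'o \<Rightarrow> nat" and lt :: "('x,'o) oword \<Rightarrow> ('x,'o) oword \<Rightarrow> bool" +
  fixes S :: "('x,'o,'k::comm_ring_1) opoly set"
  assumes Sp: "\<forall>s\<in>S. opoly ar s \<and> monic lt s"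
begin

lemma S_opoly: "s \<in> S \<Longrightarrow> opoly ar s" using Sp by auto
lemma S_nz: "s \<in> S \<Longrightarrow> s \<noteq> 0" using Sp by (auto simp: monic_def)
lemma S_lc: "s \<in> S \<Longrightarrow> Poly_Mapping.lookup s (lead lt s) = 1" using Sp by (auto simp: monic_def)
lemma S_lead: "s \<in> S \<Longrightarrow> oword ar (lead lt s)" using lead_oword S_opoly S_nz by blast
lemma S_keys: "s \<in> S \<Longrightarrow> k \<in> Poly_Mapping.keys s \<Longrightarrow> k \<noteq> lead lt s \<Longrightarrow> lt k (lead lt s)"
  using lead_props(2) S_opoly S_nz by blast
lemma S_keys_ow: "s \<in> S \<Longrightarrow> k \<in> Poly_Mapping.keys s \<Longrightarrow> oword ar k"
  using S_opoly by (auto simp: opoly_def)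

lemma fill_inj': "inj (fill c)"
  by (auto intro: injI fill_inj)

lemma gen_keys: "Poly_Mapping.keys (mapF (fill c) s) = fill c ` Poly_Mapping.keys s"
  by (rule keys_mapF_inj[OF fill_inj'])

lemma gen_lookup: "Poly_Mapping.lookup (mapF (fill c) s) (fill c w) = Poly_Mapping.lookup s w"
  by (rule lookup_mapF_inj[OF fill_inj'])

lemma gen_opoly: "vctx ar c \<Longrightarrow> s \<in> S \<Longrightarrow> opoly ar (mapF (fill c) s)"
  by (auto simp: opoly_def gen_keys intro: fill_oword S_keys_ow)

lemma gen_lc: "s \<in> S \<Longrightarrow> Poly_Mapping.lookup (mapF (fill c) s) (fill c (lead lt s)) = 1"
  by (simp add: gen_lookup S_lc)

lemma gen_keys_lt: "vctx ar c \<Longrightarrow> s \<in> S \<Longrightarrow> k \<in> Poly_Mapping.keys (mapF (fill c) s) \<Longrightarrow>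
   k \<noteq> fill c (lead lt s) \<Longrightarrow> lt k (fill c (lead lt s))"
proof -
  assume a: "vctx ar c" "s \<in> S" "k \<in> Poly_Mapping.keys (mapF (fill c) s)" "k \<noteq> fill c (lead lt s)"
  then obtain k' where k': "k' \<in> Poly_Mapping.keys s" "k = fill c k'" by (auto simp: gen_keys)
  then have "k' \<noteq> lead lt s" using a by blast
  then have "lt k' (lead lt s)" using S_keys a k' by blast
  then show ?thesis using ctx_mono[OF a(1) S_keys_ow[OF a(2) k'(1)] S_lead[OF a(2)]] k' by simp
qed

lemma S_lead_key: "s \<in> S \<Longrightarrow> lead lt s \<in> Poly_Mapping.keys s"
  using lead_props(1) S_opoly S_nz by blast

lemma gen_lead: "vctx ar c \<Longrightarrow> s \<in> S \<Longrightarrow> lead lt (mapF (fill c) s) = fill c (lead lt s)"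
proof (rule lead_eq)
  assume a: "vctx ar c" "s \<in> S"
  show "opoly ar (mapF (fill c) s)" using gen_opoly a by blast
  show "fill c (lead lt s) \<in> Poly_Mapping.keys (mapF (fill c) s)"
    using S_lead_key[OF a(2)] by (simp add: gen_keys)
  show "\<forall>v\<in>Poly_Mapping.keys (mapF (fill c) s). v \<noteq> fill c (lead lt s) \<longrightarrow> lt v (fill c (lead lt s))"
    using gen_keys_lt a by blast
qed

definition GS :: "(('x,'o) oword \<Rightarrow> bool) \<Rightarrow> ('x,'o,'k) opoly set" where
  "GS P = {mapF (fill c) s | c s. vctx ar c \<and> s \<in> S \<and> P (fill c (lead lt s))}"

lemma GS_eq: "{subst_poly u s | u s. star_word ar u \<and> s \<in> S \<and> P (subst u (lead lt s))} = GS P"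
proof (rule set_eqI, rule iffI)
  fix g assume "g \<in> {subst_poly u s | u s. star_word ar u \<and> s \<in> S \<and> P (subst u (lead lt s))}"
  then obtain u s where us: "g = subst_poly u s" "star_word ar u" "s \<in> S" "P (subst u (lead lt s))" by blast
  obtain c where c: "vctx ar c" "subst u = fill c" using star_ctx[OF us(2)] by blast
  show "g \<in> GS P" unfolding GS_def using us c by (auto simp: subst_poly_mapF)
next
  fix g assume "g \<in> GS P"
  then obtain c s where cs: "g = mapF (fill c) s" "vctx ar c" "s \<in> S" "P (fill c (lead lt s))"
    unfolding GS_def by blast
  obtain u where u: "star_word ar u" "subst u = fill c" using ctx_star[OF cs(2)] by blast
  have "g = subst_poly u s \<and> star_word ar u \<and> s \<in> S \<and> P (subst u (lead lt s))"
    using cs u by (simp add: subst_poly_mapF)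
  then show "g \<in> {subst_poly u s | u s. star_word ar u \<and> s \<in> S \<and> P (subst u (lead lt s))}"
    by blast
qed

lemma GS_eq': "{subst_poly u s | u s. star_word ar u \<and> s \<in> S} = GS (\<lambda>_. True)"
  using GS_eq[of "\<lambda>_. True"] by simp

lemma Id_eq: "Id ar S = kspan (GS (\<lambda>_. True))"
  unfolding Id_def GS_eq' ..

lemma congr_eq: "congr_mod ar lt S w p q \<longleftrightarrow> p - q \<in> kspan (GS (\<lambda>k. lt k w))"
  using GS_eq[of "\<lambda>k. lt k w"] by (simp add: congr_mod_def)

lemma GS_mono: "(\<And>k. P k \<Longrightarrow> Q k) \<Longrightarrow> GS P \<subseteq> GS Q"
  unfolding GS_def by blast

lemma GS_props: "g \<in> GS P \<Longrightarrow> opoly ar g \<and> g \<noteq> 0 \<and> P (lead lt g) \<and> Poly_Mapping.lookup g (lead lt g) = 1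
   \<and> (\<forall>k\<in>Poly_Mapping.keys g. k \<noteq> lead lt g \<longrightarrow> lt k (lead lt g))"
proof -
  assume "g \<in> GS P"
  then obtain c s where cs: "vctx ar c" "s \<in> S" "P (fill c (lead lt s))" "g = mapF (fill c) s"
    unfolding GS_def by blast
  have l: "lead lt g = fill c (lead lt s)" using cs gen_lead by simp
  have lc: "Poly_Mapping.lookup g (lead lt g) = 1" using l cs gen_lc by simp
  have "g \<noteq> 0" using lc by auto
  then show ?thesis using cs l lc gen_opoly gen_keys_lt by auto
qed

end


definition isC :: "('o \<Rightarrow> nat) \<Rightarrow> (('x,'o) oword \<Rightarrow> ('x,'o) oword) \<Rightarrow> bool" where
  "isC ar F \<longleftrightarrow> (\<exists>c. vctx ar c \<and> F = fill c)"

definition nest where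
  "nest ar F1 v1 F2 v2 \<longleftrightarrow> (\<exists>G. isC ar G \<and> v1 = G v2 \<and> (\<forall>y. F2 y = F1 (G y)))"

definition ovl where
  "ovl ar F1 v1 F2 v2 \<longleftrightarrow> (\<exists>G a b. isC ar G \<and> oword ar a \<and> oword ar b \<and> v1 @ a = b @ v2
     \<and> length (v1 @ a) < length v1 + length v2 \<and> (\<forall>x. F1 x = G (x @ a)) \<and> (\<forall>y. F2 y = G (b @ y)))"

definition dsj where
  "dsj ar F1 v1 F2 v2 \<longleftrightarrow> (\<exists>D. (\<forall>x. oword ar x \<longrightarrow> isC ar (D x)) \<and> (\<forall>y. oword ar y \<longrightarrow> isC ar (\<lambda>x. D x y))
     \<and> (\<forall>x. F1 x = D x v2) \<and> (\<forall>y. F2 y = D v1 y))"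

definition Rel where
  "Rel ar F1 v1 F2 v2 \<longleftrightarrow> nest ar F1 v1 F2 v2 \<or> nest ar F2 v2 F1 v1 \<or> ovl ar F1 v1 F2 v2 \<or> ovl ar F2 v2 F1 v1
     \<or> dsj ar F1 v1 F2 v2"

lemma isC_comp: "isC ar G1 \<Longrightarrow> isC ar G2 \<Longrightarrow> isC ar (G1 \<circ> G2)"
proof -
  assume "isC ar G1" "isC ar G2"
  then obtain c1 c2 where "vctx ar c1" "G1 = fill c1" "vctx ar c2" "G2 = fill c2" unfolding isC_def by blast
  then show ?thesis unfolding isC_def by (intro exI[of _ "cmp c1 c2"]) (auto simp: vctx_cmp)
qed

lemma isC_comp': "isC ar G1 \<Longrightarrow> isC ar G2 \<Longrightarrow> isC ar (\<lambda>x. G1 (G2 x))"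
  using isC_comp[of ar G1 G2] by (simp add: comp_def)

lemma isC_Hole: "vl ar L \<Longrightarrow> vl ar R \<Longrightarrow> isC ar (\<lambda>w. L @ w @ R)"
  unfolding isC_def by (intro exI[of _ "Hole L R"]) auto

lemma isC_In: "vctx ar (In L d A c B R) \<Longrightarrow> isC ar (\<lambda>w. L @ [Op d (A @ [fill c w] @ B)] @ R)"
  unfolding isC_def by (intro exI[of _ "In L d A c B R"]) auto

lemma isC_fill: "vctx ar c \<Longrightarrow> isC ar (fill c)"
  unfolding isC_def by blast

lemma dsj_sym: "dsj ar F1 v1 F2 v2 \<Longrightarrow> dsj ar F2 v2 F1 v1"
proof -
  assume "dsj ar F1 v1 F2 v2"
  then obtain D where D: "\<forall>x. oword ar x \<longrightarrow> isC ar (D x)" "\<forall>y. oword ar y \<longrightarrow> isC ar (\<lambda>x. D x y)"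
     "\<forall>x. F1 x = D x v2" "\<forall>y. F2 y = D v1 y" unfolding dsj_def by blast
  show ?thesis unfolding dsj_def
    by (rule exI[of _ "\<lambda>y x. D x y"]) (use D in simp)
qed

lemma Rel_sym: "Rel ar F1 v1 F2 v2 \<Longrightarrow> Rel ar F2 v2 F1 v1"
  unfolding Rel_def using dsj_sym by blast

lemma Rel_wrap:
  assumes H: "isC ar H" and R: "Rel ar F1 v1 F2 v2"
  shows "Rel ar (\<lambda>x. H (F1 x)) v1 (\<lambda>y. H (F2 y)) v2"
proof -
  have n: "nest ar (\<lambda>x. H (F1 x)) v1 (\<lambda>y. H (F2 y)) v2" if "nest ar F1 v1 F2 v2" for F1 v1 F2 v2
    using that unfolding nest_def by auto
  have o: "ovl ar (\<lambda>x. H (F1 x)) v1 (\<lambda>y. H (F2 y)) v2" if ov: "ovl ar F1 v1 F2 v2" for F1 v1 F2 v2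
  proof -
    obtain G a b where G: "isC ar G" "oword ar a" "oword ar b" "v1 @ a = b @ v2"
     "length (v1 @ a) < length v1 + length v2" "\<forall>x. F1 x = G (x @ a)" "\<forall>y. F2 y = G (b @ y)"
      using ov unfolding ovl_def by blast
    have "isC ar (\<lambda>x. H (G x))" using isC_comp'[OF H G(1)] .
    then show ?thesis unfolding ovl_def using G by (intro exI[of _ "\<lambda>x. H (G x)"] exI[of _ a] exI[of _ b]) simp
  qed
  have d: "dsj ar (\<lambda>x. H (F1 x)) v1 (\<lambda>y. H (F2 y)) v2" if ds: "dsj ar F1 v1 F2 v2"
  proof -
    obtain D where D: "\<forall>x. oword ar x \<longrightarrow> isC ar (D x)" "\<forall>y. oword ar y \<longrightarrow> isC ar (\<lambda>x. D x y)"
     "\<forall>x. F1 x = D x v2" "\<forall>y. F2 y = D v1 y" using ds unfolding dsj_def by blast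
    have "\<forall>x. oword ar x \<longrightarrow> isC ar (\<lambda>y. H (D x y))" using D(1) isC_comp'[OF H] by blast
    moreover have "\<forall>y. oword ar y \<longrightarrow> isC ar (\<lambda>x. H (D x y))" using D(2) isC_comp'[OF H] by blast
    ultimately show ?thesis unfolding dsj_def using D by (intro exI[of _ "\<lambda>x y. H (D x y)"]) simp
  qed
  show ?thesis using R n o d unfolding Rel_def by blast
qed

lemma app_split: "xs @ ys = us @ vs \<Longrightarrow> length xs \<le> length us \<Longrightarrow> \<exists>m. us = xs @ m \<and> ys = m @ vs"
proof -
  assume a: "xs @ ys = us @ vs" "length xs \<le> length us"
  then have "xs = take (length xs) us \<and> ys = drop (length xs) us @ vs"
    by (simp add: append_eq_append_conv_if)
  then show ?thesis by (metis append_take_drop_id)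
qed


lemma vl_Cons[simp]: "vl ar (p # xs) = (valid_prm ar p \<and> vl ar xs)"
  by (simp add: vl_def)
lemma vl_Nil[simp]: "vl ar []" by (simp add: vl_def)

lemma HH:
  fixes L1 R1 L2 R2 v1 v2 :: "('x,'o) oword"
  assumes v: "vl ar L1" "vl ar R1" "vl ar L2" "vl ar R2" "oword ar v1" "oword ar v2"
    and eq: "L1 @ v1 @ R1 = L2 @ v2 @ R2" and le: "length L1 \<le> length L2"
  shows "Rel ar (\<lambda>x. L1 @ x @ R1) v1 (\<lambda>y. L2 @ y @ R2) v2"
proof -
  obtain M where M: "L2 = L1 @ M" "v1 @ R1 = M @ v2 @ R2" using app_split[OF eq le] by blast
  have vM: "vl ar M" using M v by simp
  have v1: "v1 \<noteq> []" "vl ar v1" "v2 \<noteq> []" "vl ar v2" using v by (auto simp: oword_vl)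
  show ?thesis
  proof (cases "length v1 \<le> length M")
    case True
    obtain M' where M': "M = v1 @ M'" "R1 = M' @ v2 @ R2" using app_split[OF M(2) True] by blast
    have vM': "vl ar M'" using vM M' by simp
    have "dsj ar (\<lambda>x. L1 @ x @ R1) v1 (\<lambda>y. L2 @ y @ R2) v2"
      unfolding dsj_def
    proof (intro exI[of _ "\<lambda>x y. L1 @ x @ M' @ y @ R2"] conjI allI impI)
      fix x :: "('x,'o) oword" assume "oword ar x"
      then show "isC ar (\<lambda>y. L1 @ x @ M' @ y @ R2)"
        using isC_Hole[of ar "L1 @ x @ M'" R2] v vM' by (simp add: oword_vl)
    next
      fix y :: "('x,'o) oword" assume "oword ar y"
      then show "isC ar (\<lambda>x. L1 @ x @ M' @ y @ R2)"
        using isC_Hole[of ar L1 "M' @ y @ R2"] v vM' by (simp add: oword_vl)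
    qed (use M M' in auto)
    then show ?thesis unfolding Rel_def by blast
  next
    case False
    then have le2: "length M \<le> length v1" by simp
    obtain N where N: "v1 = M @ N" "v2 @ R2 = N @ R1" using app_split[OF M(2)[symmetric] le2] by blast
    have Nne: "N \<noteq> []" using N False by auto
    have vN: "vl ar N" using N v1 by simp
    show ?thesis
    proof (cases "length v2 \<le> length N")
      case True
      obtain N' where N': "N = v2 @ N'" "R2 = N' @ R1" using app_split[OF N(2) True] by blast
      have "nest ar (\<lambda>x. L1 @ x @ R1) v1 (\<lambda>y. L2 @ y @ R2) v2"
        unfolding nest_def
        by (rule exI[of _ "\<lambda>w. M @ w @ N'"]) (use isC_Hole[of ar M N'] vM vN N' N M in auto)
      then show ?thesis unfolding Rel_def by blast
    next
      case False
      then have le3: "length N \<le> length v2" by simp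
      obtain K where K: "v2 = N @ K" "R1 = K @ R2" using app_split[OF N(2)[symmetric] le3] by blast
      have Kne: "K \<noteq> []" using K False by auto
      have vK: "vl ar K" using K v1 by simp
      show ?thesis
      proof (cases "M = []")
        case True
        have "nest ar (\<lambda>y. L2 @ y @ R2) v2 (\<lambda>x. L1 @ x @ R1) v1"
          unfolding nest_def
          by (rule exI[of _ "\<lambda>w. w @ K"]) (use isC_Hole[of ar "[]" K] vK K N M True in auto)
        then show ?thesis unfolding Rel_def by blast
      next
        case Mne: False
        have "ovl ar (\<lambda>x. L1 @ x @ R1) v1 (\<lambda>y. L2 @ y @ R2) v2"
          unfolding ovl_def
          by (intro exI[of _ "\<lambda>w. L1 @ w @ R2"] exI[of _ K] exI[of _ M])
             (use isC_Hole[of ar L1 R2] v vK vM Kne Mne K N M Nne in \<open>auto simp: oword_vl\<close>)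
        then show ?thesis unfolding Rel_def by blast
      qed
    qed
  qed
qed

lemma vctx_P: "vctx ar (In L d A c B R) \<Longrightarrow> oword ar y \<Longrightarrow> valid_prm ar (Op d (A @ [fill c y] @ B))"
  using fill_oword[of ar "In L d A c B R" y] by (simp add: oword_vl)

lemma HI:
  fixes L1 R1 L2 R2 v1 v2 :: "('x,'o) oword"
  assumes v: "vl ar L1" "vl ar R1" "vctx ar (In L2 d A c B R2)" "oword ar v1" "oword ar v2"
    and eq: "L1 @ v1 @ R1 = L2 @ [Op d (A @ [fill c v2] @ B)] @ R2"
  shows "Rel ar (\<lambda>x. L1 @ x @ R1) v1 (\<lambda>y. L2 @ [Op d (A @ [fill c y] @ B)] @ R2) v2"
proof -
  define P where "P y = Op d (A @ [fill c y] @ B)" for y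
  have eqP: "L1 @ v1 @ R1 = L2 @ [P v2] @ R2" using eq by (simp add: P_def)
  have vP: "valid_prm ar (P y)" if "oword ar y" for y using vctx_P[OF v(3) that] by (simp add: P_def)
  have vv: "vl ar L2" "vl ar R2" "vl ar v1" "v1 \<noteq> []" "vl ar v2" "v2 \<noteq> []" using v by (auto simp: oword_vl)
  have c3: "vctx ar c" "1 \<le> ar d" "length A + 1 + length B = ar d" "\<forall>us\<in>set A \<union> set B. us \<noteq> [] \<and> vl ar us"
    using v(3) by auto
  have "Rel ar (\<lambda>x. L1 @ x @ R1) v1 (\<lambda>y. L2 @ [P y] @ R2) v2"
  proof (cases "length L2 < length L1")
    case True
    obtain m where m: "L1 = L2 @ m" "[P v2] @ R2 = m @ v1 @ R1" using app_split[OF eqP[symmetric]] True by fastforce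
    then obtain M' where M': "m = P v2 # M'" "R2 = M' @ v1 @ R1" using True by (cases m) auto
    have vM': "vl ar M'" using M' vv by simp
    have "dsj ar (\<lambda>x. L1 @ x @ R1) v1 (\<lambda>y. L2 @ [P y] @ R2) v2"
      unfolding dsj_def
    proof (intro exI[of _ "\<lambda>x y. L2 @ [P y] @ M' @ x @ R1"] conjI allI impI)
      fix x :: "('x,'o) oword" assume ox: "oword ar x"
      have "vctx ar (In L2 d A c B (M' @ x @ R1))" using v(3) vM' ox v(2) by (auto simp: oword_vl)
      from isC_In[OF this] show "isC ar (\<lambda>y. L2 @ [P y] @ M' @ x @ R1)" by (simp add: P_def)
    next
      fix y :: "('x,'o) oword" assume "oword ar y"
      then show "isC ar (\<lambda>x. L2 @ [P y] @ M' @ x @ R1)"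
        using isC_Hole[of ar "L2 @ [P y] @ M'" R1] vv vM' vP v(2) by simp
    qed (use m M' in auto)
    then show ?thesis unfolding Rel_def by blast
  next
    case False
    then have le: "length L1 \<le> length L2" by simp
    obtain M where M: "L2 = L1 @ M" "v1 @ R1 = M @ [P v2] @ R2" using app_split[OF eqP le] by blast
    have vM: "vl ar M" using M vv by simp
    show ?thesis
    proof (cases "length v1 \<le> length M")
      case True
      obtain M' where M': "M = v1 @ M'" "R1 = M' @ [P v2] @ R2" using app_split[OF M(2) True] by blast
      have vM': "vl ar M'" using vM M' by simp
      have "dsj ar (\<lambda>x. L1 @ x @ R1) v1 (\<lambda>y. L2 @ [P y] @ R2) v2"
        unfolding dsj_def
      proof (intro exI[of _ "\<lambda>x y. L1 @ x @ M' @ [P y] @ R2"] conjI allI impI)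
        fix x :: "('x,'o) oword" assume ox: "oword ar x"
        have "vctx ar (In (L1 @ x @ M') d A c B R2)" using v vM' ox by (auto simp: oword_vl)
        from isC_In[OF this] show "isC ar (\<lambda>y. L1 @ x @ M' @ [P y] @ R2)" by (simp add: P_def)
      next
        fix y :: "('x,'o) oword" assume "oword ar y"
        then show "isC ar (\<lambda>x. L1 @ x @ M' @ [P y] @ R2)"
          using isC_Hole[of ar L1 "M' @ [P y] @ R2"] vv vM' vP v(1) by simp
      qed (use M M' in auto)
      then show ?thesis unfolding Rel_def by blast
    next
      case False
      then have le2: "length M \<le> length v1" by simp
      obtain N where N: "v1 = M @ N" "[P v2] @ R2 = N @ R1" using app_split[OF M(2)[symmetric] le2] by blast
      then obtain N' where N': "N = P v2 # N'" "R2 = N' @ R1" using False by (cases N) auto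
      have vN': "vl ar N'" using N N' vv by simp
      have vc: "vctx ar (In M d A c B N')" using v(3) vM vN' by auto
      have "nest ar (\<lambda>x. L1 @ x @ R1) v1 (\<lambda>y. L2 @ [P y] @ R2) v2"
        unfolding nest_def
        by (rule exI[of _ "\<lambda>w. M @ [P w] @ N'"]) (use isC_In[OF vc] M N N' in \<open>auto simp: P_def\<close>)
      then show ?thesis unfolding Rel_def by blast
    qed
  qed
  then show ?thesis by (simp add: P_def)
qed

lemma II_diff:
  fixes L1 R1 L2 R2 v1 v2 :: "('x,'o) oword"
  assumes v: "vctx ar (In L1 d1 A1 c1 B1 R1)" "vctx ar (In L2 d2 A2 c2 B2 R2)" "oword ar v1" "oword ar v2"
    and eq: "L1 @ [Op d1 (A1 @ [fill c1 v1] @ B1)] @ R1 = L2 @ [Op d2 (A2 @ [fill c2 v2] @ B2)] @ R2"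
    and lt: "length L1 < length L2"
  shows "dsj ar (\<lambda>x. L1 @ [Op d1 (A1 @ [fill c1 x] @ B1)] @ R1) v1 (\<lambda>y. L2 @ [Op d2 (A2 @ [fill c2 y] @ B2)] @ R2) v2"
proof -
  define P1 where "P1 x = Op d1 (A1 @ [fill c1 x] @ B1)" for x
  define P2 where "P2 y = Op d2 (A2 @ [fill c2 y] @ B2)" for y
  have eqP: "L1 @ [P1 v1] @ R1 = L2 @ [P2 v2] @ R2" using eq by (simp add: P1_def P2_def)
  have vP1: "valid_prm ar (P1 y)" if "oword ar y" for y using vctx_P[OF v(1) that] by (simp add: P1_def)
  have vP2: "valid_prm ar (P2 y)" if "oword ar y" for y using vctx_P[OF v(2) that] by (simp add: P2_def)
  obtain m where m: "L2 = L1 @ m" "[P1 v1] @ R1 = m @ [P2 v2] @ R2" using app_split[OF eqP] lt by fastforce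
  then obtain M where M: "m = P1 v1 # M" "R1 = M @ [P2 v2] @ R2" using lt by (cases m) auto
  have vM: "vl ar M" using M v by simp
  have "dsj ar (\<lambda>x. L1 @ [P1 x] @ R1) v1 (\<lambda>y. L2 @ [P2 y] @ R2) v2"
    unfolding dsj_def
  proof (intro exI[of _ "\<lambda>x y. L1 @ [P1 x] @ M @ [P2 y] @ R2"] conjI allI impI)
    fix x :: "('x,'o) oword" assume ox: "oword ar x"
    have "vctx ar (In (L1 @ [P1 x] @ M) d2 A2 c2 B2 R2)" using v vM vP1[OF ox] by auto
    from isC_In[OF this] show "isC ar (\<lambda>y. L1 @ [P1 x] @ M @ [P2 y] @ R2)" by (simp add: P2_def)
  next
    fix y :: "('x,'o) oword" assume oy: "oword ar y"
    have "vctx ar (In L1 d1 A1 c1 B1 (M @ [P2 y] @ R2))" using v vM vP2[OF oy] by auto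
    from isC_In[OF this] show "isC ar (\<lambda>x. L1 @ [P1 x] @ M @ [P2 y] @ R2)" by (simp add: P1_def)
  qed (use m M in auto)
  then show ?thesis by (simp add: P1_def P2_def)
qed

lemma II_same:
  fixes L R v1 v2 :: "('x,'o) oword"
  assumes v: "vctx ar (In L d A1 c1 B1 R)" "vctx ar (In L d A2 c2 B2 R)" "oword ar v1" "oword ar v2"
    and eq: "A1 @ [fill c1 v1] @ B1 = A2 @ [fill c2 v2] @ B2"
    and lt: "length A1 < length A2"
  shows "dsj ar (\<lambda>x. L @ [Op d (A1 @ [fill c1 x] @ B1)] @ R) v1 (\<lambda>y. L @ [Op d (A2 @ [fill c2 y] @ B2)] @ R) v2"
proof -
  obtain m where m: "A2 = A1 @ m" "[fill c1 v1] @ B1 = m @ [fill c2 v2] @ B2" using app_split[OF eq] lt by fastforce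
  then obtain M where M: "m = fill c1 v1 # M" "B1 = M @ [fill c2 v2] @ B2" using lt by (cases m) auto
  have ow: "oword ar (fill c1 x)" if "oword ar x" for x using fill_oword[of ar c1 x] v(1) that by simp
  have ow2: "oword ar (fill c2 y)" if "oword ar y" for y using fill_oword[of ar c2 y] v(2) that by simp
  show ?thesis
    unfolding dsj_def
  proof (intro exI[of _ "\<lambda>x y. L @ [Op d (A1 @ [fill c1 x] @ M @ [fill c2 y] @ B2)] @ R"] conjI allI impI)
    fix x :: "('x,'o) oword" assume ox: "oword ar x"
    have "vctx ar (In L d (A1 @ [fill c1 x] @ M) c2 B2 R)" using v m M ow[OF ox] by (auto simp: oword_vl)
    from isC_In[OF this] show "isC ar (\<lambda>y. L @ [Op d (A1 @ [fill c1 x] @ M @ [fill c2 y] @ B2)] @ R)" by simp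
  next
    fix y :: "('x,'o) oword" assume oy: "oword ar y"
    have "vctx ar (In L d A1 c1 (M @ [fill c2 y] @ B2) R)" using v m M ow2[OF oy] by (auto simp: oword_vl)
    from isC_In[OF this] show "isC ar (\<lambda>x. L @ [Op d (A1 @ [fill c1 x] @ M @ [fill c2 y] @ B2)] @ R)" by simp
  qed (use m M in auto)
qed

lemma fill_Hole_fun: "fill (Hole L R) = (\<lambda>x. L @ x @ R)" by (simp add: fun_eq_iff)
lemma fill_In_fun: "fill (In L d A c B R) = (\<lambda>x. L @ [Op d (A @ [fill c x] @ B)] @ R)" by (simp add: fun_eq_iff)

lemma rel_main:
  "vctx ar c1 \<Longrightarrow> vctx ar c2 \<Longrightarrow> oword ar v1 \<Longrightarrow> oword ar v2 \<Longrightarrow> fill c1 v1 = fill c2 v2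
   \<Longrightarrow> Rel ar (fill c1) v1 (fill c2) v2"
proof (induction c1 arbitrary: c2)
  case (Hole L1 R1)
  show ?case
  proof (cases c2)
    case (Hole L2 R2)
    show ?thesis
    proof (cases "length L1 \<le> length L2")
      case True
      then show ?thesis using HH[of ar L1 R1 L2 R2 v1 v2] Hole.prems \<open>c2 = _\<close> by (simp add: fill_Hole_fun)
    next
      case False
      then show ?thesis using HH[of ar L2 R2 L1 R1 v2 v1] Hole.prems \<open>c2 = _\<close> Rel_sym
        by (simp add: fill_Hole_fun)
    qed
  next
    case (In L2 d A c B R2)
    then show ?thesis using HI[of ar L1 R1 L2 d A c B R2 v1 v2] Hole.prems by (simp add: fill_Hole_fun fill_In_fun)
  qed
next
  case (In L1 d1 A1 c1 B1 R1)
  show ?case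
  proof (cases c2)
    case (Hole L2 R2)
    then show ?thesis using HI[of ar L2 R2 L1 d1 A1 c1 B1 R1 v2 v1] In.prems Rel_sym
      by (simp add: fill_Hole_fun fill_In_fun)
  next
    case (In L2 d2 A2 c2' B2 R2)
    have eq: "L1 @ [Op d1 (A1 @ [fill c1 v1] @ B1)] @ R1 = L2 @ [Op d2 (A2 @ [fill c2' v2] @ B2)] @ R2"
      using In.prems \<open>c2 = _\<close> by simp
    show ?thesis
    proof (cases "length L1 < length L2")
      case True
      then have "dsj ar (fill (In L1 d1 A1 c1 B1 R1)) v1 (fill c2) v2"
        using II_diff[OF _ _ _ _ eq] In.prems \<open>c2 = _\<close> by (simp add: fill_In_fun)
      then show ?thesis unfolding Rel_def by blast
    next
      case False
      show ?thesis
      proof (cases "length L2 < length L1")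
        case True
        then have "dsj ar (fill c2) v2 (fill (In L1 d1 A1 c1 B1 R1)) v1"
          using II_diff[OF _ _ _ _ eq[symmetric]] In.prems \<open>c2 = _\<close> by (simp add: fill_In_fun)
        then show ?thesis unfolding Rel_def using dsj_sym by blast
      next
        case False
        then have "length L1 = length L2" using \<open>\<not> length L1 < length L2\<close> by simp
        then have e1: "L1 = L2" "d1 = d2" "R1 = R2" and e2: "A1 @ [fill c1 v1] @ B1 = A2 @ [fill c2' v2] @ B2"
          using eq by (auto simp: append_eq_append_conv)
        have vc: "vctx ar (In L1 d1 A1 c1 B1 R1)" "vctx ar (In L1 d1 A2 c2' B2 R1)"
          using In.prems \<open>c2 = _\<close> e1 by auto
        show ?thesis
        proof (cases "length A1 < length A2")
          case True
          then have "dsj ar (fill (In L1 d1 A1 c1 B1 R1)) v1 (fill c2) v2"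
            using II_same[OF vc _ _ e2] In.prems \<open>c2 = _\<close> e1 by (simp add: fill_In_fun)
          then show ?thesis unfolding Rel_def by blast
        next
          case False
          show ?thesis
          proof (cases "length A2 < length A1")
            case True
            then have "dsj ar (fill c2) v2 (fill (In L1 d1 A1 c1 B1 R1)) v1"
              using II_same[OF vc(2) vc(1) _ _ e2[symmetric]] In.prems \<open>c2 = _\<close> e1 by (simp add: fill_In_fun)
            then show ?thesis unfolding Rel_def using dsj_sym by blast
          next
            case False
            then have "length A1 = length A2" using \<open>\<not> length A1 < length A2\<close> by simp
            then have e3: "A1 = A2" "fill c1 v1 = fill c2' v2" "B1 = B2"
              using e2 by (auto simp: append_eq_append_conv)
            have "Rel ar (fill c1) v1 (fill c2') v2"
              using In.IH[of c2'] In.prems \<open>c2 = _\<close> e3 by simp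
            moreover have "isC ar (\<lambda>w. L1 @ [Op d1 (A1 @ [w] @ B1)] @ R1)"
              using isC_In[of ar L1 d1 A1 "Hole [] []" B1 R1] vc(1) by simp
            ultimately have "Rel ar (\<lambda>x. L1 @ [Op d1 (A1 @ [fill c1 x] @ B1)] @ R1) v1
                 (\<lambda>y. L1 @ [Op d1 (A1 @ [fill c2' y] @ B1)] @ R1) v2"
              using Rel_wrap by fastforce
            then show ?thesis using \<open>c2 = _\<close> e1 e3 by (simp add: fill_In_fun)
          qed
        qed
      qed
    qed
  qed
qed


context gsl
begin

abbreviation T where "T w \<equiv> kspan (GS (\<lambda>k. lt k w))"

lemma GS_memI: "isC ar G \<Longrightarrow> s \<in> S \<Longrightarrow> P (G (lead lt s)) \<Longrightarrow> mapF G s \<in> GS P"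
  unfolding isC_def GS_def by blast

lemma lift_T:
  assumes c: "vctx ar c" and w': "oword ar w'" and h: "h \<in> T w'"
  shows "mapF (fill c) h \<in> T (fill c w')"
proof (rule kspan_mapF[OF h])
  fix a assume "a \<in> GS (\<lambda>k. lt k w')"
  then obtain c' s where cs: "a = mapF (fill c') s" "vctx ar c'" "s \<in> S" "lt (fill c' (lead lt s)) w'"
    unfolding GS_def by blast
  have "mapF (fill c) a = mapF (fill (cmp c c')) s"
  proof -
    have "fill (cmp c c') = (\<lambda>x. fill c (fill c' x))" by (simp add: fun_eq_iff)
    then show ?thesis using cs(1) by (simp add: mapF_comp comp_def)
  qed
  moreover have "lt (fill (cmp c c') (lead lt s)) (fill c w')"
    using ctx_mono[OF c _ w' cs(4)] fill_oword[OF cs(2) S_lead[OF cs(3)]] by simp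
  ultimately have "mapF (fill c) a \<in> GS (\<lambda>k. lt k (fill c w'))"
    using GS_memI[OF isC_fill[OF vctx_cmp[OF c cs(2)]] cs(3)] by simp
  then show "mapF (fill c) a \<in> T (fill c w')" by (rule kspan_gen)
qed

lemma nest_case:
  assumes gsb: "GSB ar lt S" and c: "vctx ar c1" "vctx ar c2" and s: "s1 \<in> S" "s2 \<in> S"
    and n: "nest ar (fill c1) (lead lt s1) (fill c2) (lead lt s2)"
  shows "mapF (fill c1) s1 - mapF (fill c2) s2 \<in> T (fill c1 (lead lt s1))"
proof -
  obtain G where G: "isC ar G" "lead lt s1 = G (lead lt s2)" "\<forall>y. fill c2 y = fill c1 (G y)"
    using n unfolding nest_def by blast
  obtain c where cG: "vctx ar c" "G = fill c" using G(1) unfolding isC_def by blast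
  obtain u where u: "star_word ar u" "subst u = fill c" using ctx_star[OF cG(1)] by blast
  have l: "lead lt s1 = subst u (lead lt s2)" using G(2) cG u(2) by simp
  have "\<forall>u. star_word ar u \<and> lead lt s1 = subst u (lead lt s2) \<longrightarrow> congr_mod ar lt S (lead lt s1) (s1 - subst_poly u s2) 0"
    using gsb s unfolding GSB_def by blast
  then have "congr_mod ar lt S (lead lt s1) (s1 - subst_poly u s2) 0"
    using u(1) l by blast
  then have "s1 - mapF (fill c) s2 \<in> T (lead lt s1)"
    by (simp add: congr_eq subst_poly_mapF u(2))
  from lift_T[OF c(1) S_lead[OF s(1)] this]
  have "mapF (fill c1) s1 - mapF (fill c1 \<circ> fill c) s2 \<in> T (fill c1 (lead lt s1))"
    by (simp add: mapF_diff mapF_comp)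
  moreover have "fill c1 \<circ> fill c = fill c2" using G(3) cG by (simp add: fun_eq_iff)
  ultimately show ?thesis by simp
qed

lemma ovl_case:
  assumes gsb: "GSB ar lt S" and c: "vctx ar c1" "vctx ar c2" and s: "s1 \<in> S" "s2 \<in> S"
    and o: "ovl ar (fill c1) (lead lt s1) (fill c2) (lead lt s2)"
  shows "mapF (fill c1) s1 - mapF (fill c2) s2 \<in> T (fill c1 (lead lt s1))"
proof -
  obtain G a b where G: "isC ar G" "oword ar a" "oword ar b" "lead lt s1 @ a = b @ lead lt s2"
     "length (lead lt s1 @ a) < length (lead lt s1) + length (lead lt s2)"
     "\<forall>x. fill c1 x = G (x @ a)" "\<forall>y. fill c2 y = G (b @ y)"
    using o unfolding ovl_def by blast
  obtain c where cG: "vctx ar c" "G = fill c" using G(1) unfolding isC_def by blast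
  have "congr_mod ar lt S (lead lt s1 @ a) (rmul s1 a - lmul b s2) 0"
    using gsb s G(2-5) unfolding GSB_def by blast
  then have h: "rmul s1 a - lmul b s2 \<in> T (lead lt s1 @ a)"
    by (simp add: congr_eq)
  have ow: "oword ar (lead lt s1 @ a)" using S_lead[OF s(1)] G(2) by (simp add: oword_vl)
  from lift_T[OF cG(1) ow h]
  have "mapF (fill c \<circ> (\<lambda>w. w @ a)) s1 - mapF (fill c \<circ> (\<lambda>w. b @ w)) s2 \<in> T (fill c (lead lt s1 @ a))"
    by (simp add: mapF_diff mapF_comp rmul_mapF lmul_mapF)
  moreover have "fill c \<circ> (\<lambda>w. w @ a) = fill c1" "fill c \<circ> (\<lambda>w. b @ w) = fill c2"
    using G(6,7) cG by (simp_all add: fun_eq_iff)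
  moreover have "fill c (lead lt s1 @ a) = fill c1 (lead lt s1)" using G(6) cG by simp
  ultimately show ?thesis by simp
qed

lemma dsj_case:
  assumes c: "vctx ar c1" "vctx ar c2" and s: "s1 \<in> S" "s2 \<in> S"
    and weq: "fill c1 (lead lt s1) = fill c2 (lead lt s2)"
    and d: "dsj ar (fill c1) (lead lt s1) (fill c2) (lead lt s2)"
  shows "mapF (fill c1) s1 - mapF (fill c2) s2 \<in> T (fill c1 (lead lt s1))"
proof -
  define v1 where "v1 = lead lt s1"
  define v2 where "v2 = lead lt s2"
  define K1 where "K1 = Poly_Mapping.keys s1"
  define K2 where "K2 = Poly_Mapping.keys s2"
  define w where "w = fill c1 v1"
  obtain D where D: "\<forall>x. oword ar x \<longrightarrow> isC ar (D x)" "\<forall>y. oword ar y \<longrightarrow> isC ar (\<lambda>x. D x y)"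
    "\<forall>x. fill c1 x = D x v2" "\<forall>y. fill c2 y = D v1 y"
    using d unfolding dsj_def v1_def v2_def by blast
  define t where "t x y = Poly_Mapping.single (D x y) (Poly_Mapping.lookup s1 x * Poly_Mapping.lookup s2 y)" for x y
  have v1K: "v1 \<in> K1" unfolding v1_def K1_def using S_lead_key[OF s(1)] .
  have v2K: "v2 \<in> K2" unfolding v2_def K2_def using S_lead_key[OF s(2)] .
  have fK: "finite K1" "finite K2" unfolding K1_def K2_def by simp_all
  have A: "mapF (fill c1) s1 = (\<Sum>x\<in>K1. t x v2)"
    unfolding mapF_def t_def K1_def using S_lc[OF s(2)] D(3) by (simp add: v2_def)
  have B: "mapF (fill c2) s2 = (\<Sum>y\<in>K2. t v1 y)"
    unfolding mapF_def t_def K2_def using S_lc[OF s(1)] D(4) by (simp add: v1_def)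
  define Q where "Q = (\<Sum>x\<in>K1. \<Sum>y\<in>K2. t x y)"
  define T1 where "T1 = (\<Sum>x\<in>K1 - {v1}. \<Sum>y\<in>K2. t x y)"
  define T2 where "T2 = (\<Sum>x\<in>K1. \<Sum>y\<in>K2 - {v2}. t x y)"
  have Q1: "Q = (\<Sum>x\<in>K1. t x v2) + T2"
    unfolding Q_def T2_def by (simp add: sum.remove[OF fK(2) v2K] sum.distrib)
  have Q2: "Q = (\<Sum>y\<in>K2. t v1 y) + T1"
    unfolding Q_def T1_def by (simp add: sum.remove[OF fK(1) v1K])
  have diff: "mapF (fill c1) s1 - mapF (fill c2) s2 = T1 - T2"
    using Q1 Q2 A B by (simp add: algebra_simps)
  have ow1: "oword ar v1" unfolding v1_def using S_lead[OF s(1)] .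
  have ow2: "oword ar v2" unfolding v2_def using S_lead[OF s(2)] .
  have T1in: "T1 \<in> T w"
    unfolding T1_def
  proof (rule kspan_sum)
    fix x assume x: "x \<in> K1 - {v1}"
    have ox: "oword ar x" using x S_keys_ow[OF s(1)] unfolding K1_def by blast
    have "lt x v1" using x S_keys[OF s(1)] unfolding K1_def v1_def by blast
    then have "lt (D x v2) w" unfolding w_def using ctx_mono[OF c(1) ox ow1] D(3) by metis
    then have g: "mapF (D x) s2 \<in> GS (\<lambda>k. lt k w)"
      using GS_memI[of "D x" s2 "\<lambda>k. lt k w"] D(1) ox s(2) by (simp add: v2_def)
    have "(\<Sum>y\<in>K2. t x y) = scale (Poly_Mapping.lookup s1 x) (mapF (D x) s2)"
      unfolding t_def mapF_def K2_def by (simp add: scale_sum scale_single)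
    then show "(\<Sum>y\<in>K2. t x y) \<in> T w" using kspan_sgen[OF g] by simp
  qed
  have T2': "T2 = (\<Sum>y\<in>K2 - {v2}. \<Sum>x\<in>K1. t x y)"
    unfolding T2_def by (rule sum.swap)
  have T2in: "T2 \<in> T w"
    unfolding T2'
  proof (rule kspan_sum)
    fix y assume y: "y \<in> K2 - {v2}"
    have oy: "oword ar y" using y S_keys_ow[OF s(2)] unfolding K2_def by blast
    have "lt y v2" using y S_keys[OF s(2)] unfolding K2_def v2_def by blast
    then have "lt (fill c2 y) (fill c2 v2)" using ctx_mono[OF c(2) oy ow2] by blast
    then have "lt (D v1 y) w" unfolding w_def using D(4) weq by (simp add: v1_def v2_def)
    then have g: "mapF (\<lambda>x. D x y) s1 \<in> GS (\<lambda>k. lt k w)"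
      using GS_memI[of "\<lambda>x. D x y" s1 "\<lambda>k. lt k w"] D(2) oy s(1) by (simp add: v1_def)
    have "(\<Sum>x\<in>K1. t x y) = scale (Poly_Mapping.lookup s2 y) (mapF (\<lambda>x. D x y) s1)"
      unfolding t_def mapF_def K1_def by (simp add: scale_sum scale_single mult.commute)
    then show "(\<Sum>x\<in>K1. t x y) \<in> T w" using kspan_sgen[OF g] by simp
  qed
  show ?thesis using diff kspan_diff[OF T1in T2in] by (simp add: w_def v1_def)
qed

end


context gsl
begin

abbreviation lew where "lew W \<equiv> (\<lambda>k. k = W \<or> lt k W)"

lemma key_lemma:
  assumes gsb: "GSB ar lt S" and c: "vctx ar c1" "vctx ar c2" and s: "s1 \<in> S" "s2 \<in> S"
    and weq: "fill c1 (lead lt s1) = fill c2 (lead lt s2)"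
  shows "mapF (fill c1) s1 - mapF (fill c2) s2 \<in> T (fill c1 (lead lt s1))"
proof -
  have R: "Rel ar (fill c1) (lead lt s1) (fill c2) (lead lt s2)"
    using rel_main[OF c S_lead[OF s(1)] S_lead[OF s(2)] weq] .
  have neg: "mapF (fill c1) s1 - mapF (fill c2) s2 \<in> T (fill c1 (lead lt s1))"
    if "mapF (fill c2) s2 - mapF (fill c1) s1 \<in> T (fill c2 (lead lt s2))"
    using kspan_uminus[OF that] weq by simp
  show ?thesis
    using R unfolding Rel_def
  proof (elim disjE)
    assume "nest ar (fill c1) (lead lt s1) (fill c2) (lead lt s2)"
    then show ?thesis using nest_case[OF gsb c s] by blast
  next
    assume "nest ar (fill c2) (lead lt s2) (fill c1) (lead lt s1)"
    then show ?thesis using nest_case[OF gsb c(2,1) s(2,1)] neg by blast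
  next
    assume "ovl ar (fill c1) (lead lt s1) (fill c2) (lead lt s2)"
    then show ?thesis using ovl_case[OF gsb c s] by blast
  next
    assume "ovl ar (fill c2) (lead lt s2) (fill c1) (lead lt s1)"
    then show ?thesis using ovl_case[OF gsb c(2,1) s(2,1)] neg by blast
  next
    assume "dsj ar (fill c1) (lead lt s1) (fill c2) (lead lt s2)"
    then show ?thesis using dsj_case[OF c s weq] by blast
  qed
qed

lemma GS_lead: "b \<in> GS P \<Longrightarrow> \<exists>c s. vctx ar c \<and> s \<in> S \<and> b = mapF (fill c) s \<and> lead lt b = fill c (lead lt s) \<and> P (lead lt b)"
  unfolding GS_def using gen_lead by fastforce

lemma GS_change: "b \<in> GS P \<Longrightarrow> Q (lead lt b) \<Longrightarrow> b \<in> GS Q"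
proof -
  assume a: "b \<in> GS P" "Q (lead lt b)"
  then obtain c s where "vctx ar c" "s \<in> S" "b = mapF (fill c) s" "lead lt b = fill c (lead lt s)"
    using GS_lead by blast
  then show ?thesis unfolding GS_def using a(2) by auto
qed

lemma kspan_empty: "p \<in> kspan {} \<Longrightarrow> p = 0"
  by (induction p rule: kspan.induct) auto

lemma GS_keys: "b \<in> GS P \<Longrightarrow> k \<in> Poly_Mapping.keys b \<Longrightarrow> oword ar k \<and> (k = lead lt b \<or> lt k (lead lt b))"
proof -
  assume a: "b \<in> GS P" "k \<in> Poly_Mapping.keys b"
  have "opoly ar b" "\<forall>k\<in>Poly_Mapping.keys b. k \<noteq> lead lt b \<longrightarrow> lt k (lead lt b)"
    using GS_props[OF a(1)] by blast+
  then show ?thesis using a(2) unfolding opoly_def by blast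
qed

lemma span_opoly: "p \<in> kspan (GS P) \<Longrightarrow> opoly ar p"
  unfolding opoly_def using kspan_keys[of p "GS P" "oword ar"] GS_keys by blast

lemma span_keys_le:
  assumes p: "p \<in> kspan (GS (lew W))" and W: "oword ar W" and k: "k \<in> Poly_Mapping.keys p"
  shows "k = W \<or> lt k W"
proof (rule kspan_keys[OF p _ k])
  fix a k assume a: "a \<in> GS (lew W)" "k \<in> Poly_Mapping.keys a"
  have l: "lead lt a = W \<or> lt (lead lt a) W" using GS_props[OF a(1)] by blast
  have ol: "oword ar (lead lt a)" using GS_props[OF a(1)] lead_oword by blast
  from GS_keys[OF a] have "oword ar k" "k = lead lt a \<or> lt k (lead lt a)" by auto
  then show "k = W \<or> lt k W" using l trans[of k "lead lt a" W] ol W by blast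
qed

lemma span_keys_lt:
  assumes p: "p \<in> T W" and W: "oword ar W" and k: "k \<in> Poly_Mapping.keys p"
  shows "lt k W"
proof (rule kspan_keys[OF p _ k])
  fix a k assume a: "a \<in> GS (\<lambda>k. lt k W)" "k \<in> Poly_Mapping.keys a"
  have l: "lt (lead lt a) W" using GS_props[OF a(1)] by blast
  have ol: "oword ar (lead lt a)" using GS_props[OF a(1)] lead_oword by blast
  from GS_keys[OF a] have "oword ar k" "k = lead lt a \<or> lt k (lead lt a)" by auto
  then show "lt k W" using l trans[of k "lead lt a" W] ol W by blast
qed

lemma GS_lead_ow: "b \<in> GS P \<Longrightarrow> oword ar (lead lt b)"
proof -
  assume a: "b \<in> GS P"
  have "opoly ar b" "b \<noteq> 0" using GS_props[OF a] by blast+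
  then show ?thesis by (rule lead_oword)
qed

lemma GS_P: "b \<in> GS P \<Longrightarrow> P (lead lt b)"
  using GS_props by blast

lemma GS_lc: "b \<in> GS P \<Longrightarrow> Poly_Mapping.lookup b (lead lt b) = 1"
  using GS_props by blast

lemma bound_exists:
  assumes f: "f \<in> kspan (GS P)" and nz: "f \<noteq> 0"
  shows "\<exists>m. P m \<and> oword ar m \<and> f \<in> kspan (GS (lew m))"
proof -
  obtain B where B: "B \<subseteq> GS P" "finite B" "f \<in> kspan B" using kspan_finite[OF f] by blast
  have Bne: "B \<noteq> {}" using B(3) nz kspan_empty by blast
  have ow: "\<forall>k\<in>lead lt ` B. oword ar k"
  proof
    fix k assume "k \<in> lead lt ` B"
    then obtain b where "b \<in> B" "k = lead lt b" by blast
    then show "oword ar k" using GS_lead_ow B(1) by blast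
  qed
  have "finite (lead lt ` B)" "lead lt ` B \<noteq> {}" using B(2) Bne by simp_all
  then obtain m where m: "m \<in> lead lt ` B" "\<forall>v\<in>lead lt ` B. v \<noteq> m \<longrightarrow> lt v m"
    using max_exists[of "lead lt ` B"] ow by blast
  have "B \<subseteq> GS (lew m)"
  proof
    fix b assume b: "b \<in> B"
    then have "lead lt b = m \<or> lt (lead lt b) m" using m(2) by blast
    then show "b \<in> GS (lew m)" using B(1) b GS_change[of b P "lew m"] by blast
  qed
  then have "f \<in> kspan (GS (lew m))" using kspan_mono[OF B(3)] by blast
  moreover obtain b0 where "b0 \<in> B" "m = lead lt b0" using m(1) by blast
  then have "P m" using B(1) GS_P by blast
  ultimately show ?thesis using m(1) ow by blast
qed

lemma lemmaA:
  assumes gsb: "GSB ar lt S" and f: "f \<in> kspan (GS (lew W))" and W: "oword ar W"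
  shows "f \<in> T W \<or> (\<exists>t\<in>GS (\<lambda>k. k = W). f - scale (Poly_Mapping.lookup f W) t \<in> T W)"
  using f
proof (induction f rule: kspan.induct)
  case zero then show ?case by (auto intro: kspan.zero)
next
  case (add a p c)
  have aW: "lead lt a = W \<or> lt (lead lt a) W" using GS_P[OF add.hyps(1)] .
  have la: "Poly_Mapping.lookup a (lead lt a) = 1" using GS_lc[OF add.hyps(1)] .
  have ola: "oword ar (lead lt a)" using GS_lead_ow[OF add.hyps(1)] .
  have lp0: "Poly_Mapping.lookup p W = 0" if pT: "p \<in> T W"
  proof (rule ccontr)
    assume "Poly_Mapping.lookup p W \<noteq> 0"
    then have "W \<in> Poly_Mapping.keys p" by (simp add: in_keys_iff)
    then have "lt W W" using span_keys_lt[OF pT W] by blast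
    then show False using irr[OF W] by blast
  qed
  show ?case
  proof (cases "lt (lead lt a) W")
    case True
    then have "a \<in> GS (\<lambda>k. lt k W)" using GS_change[OF add.hyps(1), of "\<lambda>k. lt k W"] by blast
    then have aT: "scale c a \<in> T W" by (rule kspan_sgen)
    have la0: "Poly_Mapping.lookup a W = 0"
    proof (rule ccontr)
      assume "Poly_Mapping.lookup a W \<noteq> 0"
      then have "W \<in> Poly_Mapping.keys a" by (simp add: in_keys_iff)
      then have "W = lead lt a \<or> lt W (lead lt a)" using GS_keys[OF add.hyps(1)] by blast
      then show False using True asym[OF ola W] irr[OF W] by blast
    qed
    from add.IH show ?thesis
    proof
      assume "p \<in> T W" then show ?thesis using kspan_add[OF aT] by blast
    next
      assume "\<exists>t\<in>GS (\<lambda>k. k = W). p - scale (Poly_Mapping.lookup p W) t \<in> T W"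
      then obtain t where t: "t \<in> GS (\<lambda>k. k = W)" "p - scale (Poly_Mapping.lookup p W) t \<in> T W" by blast
      have "scale c a + p - scale (Poly_Mapping.lookup (scale c a + p) W) t
          = scale c a + (p - scale (Poly_Mapping.lookup p W) t)"
        by (simp add: lookup_add la0)
      then have "scale c a + p - scale (Poly_Mapping.lookup (scale c a + p) W) t \<in> T W"
        by (simp only:) (rule kspan_add[OF aT t(2)])
      then show ?thesis using t(1) by blast
    qed
  next
    case False
    then have aeq: "lead lt a = W" using aW by blast
    then have aG: "a \<in> GS (\<lambda>k. k = W)" using GS_change[OF add.hyps(1), of "\<lambda>k. k = W"] by blast
    from add.IH show ?thesis
    proof
      assume pT: "p \<in> T W"
      have "Poly_Mapping.lookup (scale c a + p) W = c"
        using lp0[OF pT] la aeq by (simp add: lookup_add)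
      then have "scale c a + p - scale (Poly_Mapping.lookup (scale c a + p) W) a = p"
        by simp
      then have "scale c a + p - scale (Poly_Mapping.lookup (scale c a + p) W) a \<in> T W"
        using pT by (simp only:)
      then show ?thesis using aG by blast
    next
      assume "\<exists>t\<in>GS (\<lambda>k. k = W). p - scale (Poly_Mapping.lookup p W) t \<in> T W"
      then obtain t where t: "t \<in> GS (\<lambda>k. k = W)" "p - scale (Poly_Mapping.lookup p W) t \<in> T W" by blast
      obtain c1 s1 where cs1: "vctx ar c1" "s1 \<in> S" "a = mapF (fill c1) s1" "lead lt a = fill c1 (lead lt s1)"
        using GS_lead[OF add.hyps(1)] by blast
      obtain c2 s2 where cs2: "vctx ar c2" "s2 \<in> S" "t = mapF (fill c2) s2" "lead lt t = fill c2 (lead lt s2)" "lead lt t = W"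
        using GS_lead[OF t(1)] by blast
      have "fill c1 (lead lt s1) = fill c2 (lead lt s2)" using cs1(4) cs2(4,5) aeq by simp
      from key_lemma[OF gsb cs1(1) cs2(1) cs1(2) cs2(2) this]
      have "a - t \<in> T W" using cs1(3,4) cs2(3) aeq by simp
      then have "scale c (a - t) \<in> T W" by (rule kspan_scale)
      moreover have "scale c a + p - scale (Poly_Mapping.lookup (scale c a + p) W) t
          = scale c (a - t) + (p - scale (Poly_Mapping.lookup p W) t)"
      proof -
        have "Poly_Mapping.lookup (scale c a + p) W = c + Poly_Mapping.lookup p W"
          using la aeq by (simp add: lookup_add)
        then show ?thesis by (simp add: scale_diff scale_add_left algebra_simps)
      qed
      ultimately have "scale c a + p - scale (Poly_Mapping.lookup (scale c a + p) W) t \<in> T W"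
        by (simp only:) (rule kspan_add[OF _ t(2)])
      then show ?thesis using t(1) by blast
    qed
  qed
qed

end


context gsl
begin

lemma I_II_aux:
  assumes gsb: "GSB ar lt S" and W: "oword ar W"
  shows "\<forall>f. f \<in> kspan (GS (lew W)) \<longrightarrow> f \<noteq> 0 \<longrightarrow> (\<exists>c s. vctx ar c \<and> s \<in> S \<and> lead lt f = fill c (lead lt s))"
proof (rule wf_induct_ow[OF W])
  fix W assume hyp: "oword ar W" and IH: "\<And>V. oword ar V \<Longrightarrow> lt V W \<Longrightarrow>
    \<forall>f. f \<in> kspan (GS (lew V)) \<longrightarrow> f \<noteq> 0 \<longrightarrow> (\<exists>c s. vctx ar c \<and> s \<in> S \<and> lead lt f = fill c (lead lt s))"
  show "\<forall>f. f \<in> kspan (GS (lew W)) \<longrightarrow> f \<noteq> 0 \<longrightarrow> (\<exists>c s. vctx ar c \<and> s \<in> S \<and> lead lt f = fill c (lead lt s))"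
  proof (intro allI impI)
    fix f assume f: "f \<in> kspan (GS (lew W))" and nz: "f \<noteq> 0"
    have lowcase: "\<exists>c s. vctx ar c \<and> s \<in> S \<and> lead lt f = fill c (lead lt s)" if fT: "f \<in> T W"
    proof -
      obtain m where m: "lt m W" "oword ar m" "f \<in> kspan (GS (lew m))"
        using bound_exists[OF fT nz] by blast
      then show ?thesis using IH[OF m(2) m(1)] nz by blast
    qed
    from lemmaA[OF gsb f hyp] show "\<exists>c s. vctx ar c \<and> s \<in> S \<and> lead lt f = fill c (lead lt s)"
    proof
      assume "f \<in> T W" then show ?thesis by (rule lowcase)
    next
      assume "\<exists>t\<in>GS (\<lambda>k. k = W). f - scale (Poly_Mapping.lookup f W) t \<in> T W"
      then obtain t where t: "t \<in> GS (\<lambda>k. k = W)" "f - scale (Poly_Mapping.lookup f W) t \<in> T W" by blast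
      show ?thesis
      proof (cases "Poly_Mapping.lookup f W = 0")
        case True
        then show ?thesis using t(2) lowcase by simp
      next
        case False
        then have Wk: "W \<in> Poly_Mapping.keys f" by (simp add: in_keys_iff)
        have "lead lt f = W"
        proof (rule lead_eq)
          show "opoly ar f" using span_opoly[OF f] .
          show "W \<in> Poly_Mapping.keys f" by (rule Wk)
          show "\<forall>v\<in>Poly_Mapping.keys f. v \<noteq> W \<longrightarrow> lt v W"
            using span_keys_le[OF f hyp] by blast
        qed
        moreover obtain c s where "vctx ar c" "s \<in> S" "lead lt t = fill c (lead lt s)" "lead lt t = W"
          using GS_lead[OF t(1)] by blast
        ultimately show ?thesis by metis
      qed
    qed
  qed
qed

lemma I_II:
  assumes gsb: "GSB ar lt S" and f: "f \<in> Id ar S" and nz: "f \<noteq> 0"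
  shows "\<exists>u s. star_word ar u \<and> s \<in> S \<and> lead lt f = subst u (lead lt s)"
proof -
  obtain m where m: "oword ar m" "f \<in> kspan (GS (lew m))"
    using bound_exists[of f "\<lambda>_. True"] f nz by (auto simp: Id_eq)
  obtain c s where cs: "vctx ar c" "s \<in> S" "lead lt f = fill c (lead lt s)"
    using I_II_aux[OF gsb m(1)] m(2) nz by blast
  obtain u where "star_word ar u" "subst u = fill c" using ctx_star[OF cs(1)] by blast
  then show ?thesis using cs by metis
qed

end


context gsl
begin

definition IIp where
  "IIp \<longleftrightarrow> (\<forall>f\<in>Id ar S. f \<noteq> 0 \<longrightarrow> (\<exists>u s. star_word ar u \<and> s \<in> S \<and> lead lt f = subst u (lead lt s)))"

lemma keys_diff: "Poly_Mapping.keys (f - g) \<subseteq> Poly_Mapping.keys f \<union> Poly_Mapping.keys g"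
  by (auto simp: in_keys_iff lookup_minus)

lemma gen_star:
  assumes u: "star_word ar u" and s: "s \<in> S"
  shows "subst_poly u s \<in> GS (\<lambda>k. k = subst u (lead lt s))" "oword ar (subst u (lead lt s))"
proof -
  obtain c where c: "vctx ar c" "subst u = fill c" using star_ctx[OF u] by blast
  show "subst_poly u s \<in> GS (\<lambda>k. k = subst u (lead lt s))"
    using GS_memI[OF isC_fill[OF c(1)] s, of "\<lambda>k. k = subst u (lead lt s)"] c(2)
    by (simp add: subst_poly_mapF)
  show "oword ar (subst u (lead lt s))" using fill_oword[OF c(1) S_lead[OF s]] c(2) by simp
qed

lemma GS_Id: "g \<in> GS P \<Longrightarrow> g \<in> Id ar S"
  unfolding Id_eq using GS_change[of g P "\<lambda>_. True"] kspan_gen by blast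

lemma lead_below:
  assumes h: "opoly ar h" "h \<noteq> 0" and w: "oword ar w"
    and kb: "\<forall>k\<in>Poly_Mapping.keys h. k = w \<or> lt k w" and l0: "Poly_Mapping.lookup h w = 0"
  shows "lt (lead lt h) w"
proof -
  have "lead lt h \<in> Poly_Mapping.keys h" using lead_props(1)[OF h] .
  moreover then have "lead lt h \<noteq> w" using l0 by (auto simp: in_keys_iff)
  ultimately show ?thesis using kb by blast
qed

lemma Id_opoly: "f \<in> Id ar S \<Longrightarrow> opoly ar f"
  unfolding Id_eq by (rule span_opoly)

lemma Id_diff_scale: "h \<in> Id ar S \<Longrightarrow> t \<in> GS P \<Longrightarrow> h - scale c t \<in> Id ar S"
  using kspan_diff[of h "GS (\<lambda>_. True)" "scale c t"] kspan_sgen GS_change[of t P "\<lambda>_. True"]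
  unfolding Id_eq by blast

definition rep where
  "rep h B \<longleftrightarrow> (\<exists>(n::nat) (\<alpha>::nat \<Rightarrow> 'k) u s.
       (\<forall>i < n. star_word ar (u i) \<and> s i \<in> S) \<and>
       h = (\<Sum>i < n. scale (\<alpha> i) (subst_poly (u i) (s i))) \<and>
       (\<forall>i j. i < j \<and> j < n \<longrightarrow> lt (subst (u j) (lead lt (s j))) (subst (u i) (lead lt (s i)))) \<and>
       (\<forall>i<n. subst (u i) (lead lt (s i)) = B \<or> lt (subst (u i) (lead lt (s i))) B))"

lemma Bp_aux:
  assumes II: IIp and W: "oword ar W"
  shows "\<forall>h. h \<in> Id ar S \<and> h \<noteq> 0 \<and> lead lt h = W \<longrightarrow> rep h W"
proof (rule wf_induct_ow[OF W])
  fix W assume hyp: "oword ar W" and IH: "\<And>V. oword ar V \<Longrightarrow> lt V W \<Longrightarrow>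
    \<forall>h. h \<in> Id ar S \<and> h \<noteq> 0 \<and> lead lt h = V \<longrightarrow> rep h V"
  show "\<forall>h. h \<in> Id ar S \<and> h \<noteq> 0 \<and> lead lt h = W \<longrightarrow> rep h W"
  proof (intro allI impI, elim conjE)
    fix h assume h: "h \<in> Id ar S" "h \<noteq> 0" "lead lt h = W"
    obtain u0 s0 where us0: "star_word ar u0" "s0 \<in> S" "W = subst u0 (lead lt s0)"
      using II h unfolding IIp_def by blast
    define t where "t = subst_poly u0 s0"
    have tG: "t \<in> GS (\<lambda>k. k = W)" using gen_star(1)[OF us0(1,2)] us0(3) by (simp add: t_def)
    have lt1: "Poly_Mapping.lookup t W = 1" using GS_lc[OF tG] GS_P[OF tG] by simp
    define c0 where "c0 = Poly_Mapping.lookup h W"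
    define h' where "h' = h - scale c0 t"
    have h'Id: "h' \<in> Id ar S" unfolding h'_def using Id_diff_scale[OF h(1) tG] .
    have hop: "opoly ar h" using Id_opoly[OF h(1)] .
    have lh: "\<forall>k\<in>Poly_Mapping.keys h. k = W \<or> lt k W" using lead_props(2)[OF hop h(2)] h(3) by blast
    have lt': "\<forall>k\<in>Poly_Mapping.keys t. k = W \<or> lt k W"
      using GS_keys[OF tG] GS_P[OF tG] by blast
    show "rep h W"
    proof (cases "h' = 0")
      case True
      then have "h = scale c0 t" unfolding h'_def by simp
      then have "h = (\<Sum>i<(1::nat). scale ((\<lambda>_. c0) i) (subst_poly ((\<lambda>_. u0) i) ((\<lambda>_. s0) i)))"
        by (simp add: t_def)
      then show ?thesis unfolding rep_def using us0
        by (intro exI[of _ "1::nat"] exI[of _ "\<lambda>_. c0"] exI[of _ "\<lambda>_. u0"] exI[of _ "\<lambda>_. s0"]) auto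
    next
      case False
      have kh': "\<forall>k\<in>Poly_Mapping.keys h'. k = W \<or> lt k W"
      proof
        fix k assume "k \<in> Poly_Mapping.keys h'"
        then have "k \<in> Poly_Mapping.keys h \<or> k \<in> Poly_Mapping.keys t"
          using keys_diff[of h "scale c0 t"] keys_scale_sub[of c0 t] unfolding h'_def by blast
        then show "k = W \<or> lt k W" using lh lt' by blast
      qed
      have l0: "Poly_Mapping.lookup h' W = 0" unfolding h'_def c0_def using lt1 by (simp add: lookup_minus)
      have ltW: "lt (lead lt h') W" using lead_below[OF Id_opoly[OF h'Id] False hyp kh' l0] .
      have ow': "oword ar (lead lt h')" using lead_oword[OF Id_opoly[OF h'Id] False] .
      have "rep h' (lead lt h')" using IH[OF ow' ltW] h'Id False by simp
      then obtain n :: nat and \<alpha> u s where r: "\<forall>i < n. star_word ar (u i) \<and> s i \<in> S"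
        "h' = (\<Sum>i < n. scale (\<alpha> i) (subst_poly (u i) (s i)))"
        "\<forall>i j. i < j \<and> j < n \<longrightarrow> lt (subst (u j) (lead lt (s j))) (subst (u i) (lead lt (s i)))"
        "\<forall>i<n. subst (u i) (lead lt (s i)) = lead lt h' \<or> lt (subst (u i) (lead lt (s i))) (lead lt h')"
        unfolding rep_def by blast
      define \<alpha>' where "\<alpha>' i = (case i of 0 \<Rightarrow> c0 | Suc j \<Rightarrow> \<alpha> j)" for i
      define u' where "u' i = (case i of 0 \<Rightarrow> u0 | Suc j \<Rightarrow> u j)" for i
      define s' where "s' i = (case i of 0 \<Rightarrow> s0 | Suc j \<Rightarrow> s j)" for i
      have lW: "lt (subst (u j) (lead lt (s j))) W" if "j < n" for j
      proof -
        have "star_word ar (u j)" "s j \<in> S" using r(1) that by auto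
        then have oj: "oword ar (subst (u j) (lead lt (s j)))" by (rule gen_star(2))
        have "subst (u j) (lead lt (s j)) = lead lt h' \<or> lt (subst (u j) (lead lt (s j))) (lead lt h')"
          using r(4) that by blast
        then show ?thesis
        proof
          assume "subst (u j) (lead lt (s j)) = lead lt h'" then show ?thesis using ltW by simp
        next
          assume "lt (subst (u j) (lead lt (s j))) (lead lt h')"
          then show ?thesis using trans[OF oj ow' hyp] ltW by blast
        qed
      qed
      have P1: "\<forall>i < Suc n. star_word ar (u' i) \<and> s' i \<in> S"
        using r(1) us0 by (auto simp: u'_def s'_def split: nat.split)
      have "h = scale c0 t + h'" unfolding h'_def by simp
      then have P2: "h = (\<Sum>i < Suc n. scale (\<alpha>' i) (subst_poly (u' i) (s' i)))"
        using r(2) unfolding sum.lessThan_Suc_shift by (simp add: \<alpha>'_def u'_def s'_def t_def)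
      have P3: "\<forall>i j. i < j \<and> j < Suc n \<longrightarrow> lt (subst (u' j) (lead lt (s' j))) (subst (u' i) (lead lt (s' i)))"
      proof (intro allI impI, elim conjE)
        fix i j :: nat assume ij: "i < j" "j < Suc n"
        then obtain j' where j': "j = Suc j'" "j' < n" by (cases j) auto
        show "lt (subst (u' j) (lead lt (s' j))) (subst (u' i) (lead lt (s' i)))"
        proof (cases i)
          case 0 then show ?thesis using lW[OF j'(2)] us0(3) j' by (simp add: u'_def s'_def)
        next
          case (Suc i') then show ?thesis using r(3) ij j' by (simp add: u'_def s'_def)
        qed
      qed
      have P4: "\<forall>i<Suc n. subst (u' i) (lead lt (s' i)) = W \<or> lt (subst (u' i) (lead lt (s' i))) W"
      proof (intro allI impI)
        fix i assume "i < Suc n"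
        then show "subst (u' i) (lead lt (s' i)) = W \<or> lt (subst (u' i) (lead lt (s' i))) W"
          using lW us0(3) by (cases i) (auto simp: u'_def s'_def)
      qed
      show ?thesis unfolding rep_def
        by (rule exI[of _ "Suc n"], rule exI[of _ \<alpha>'], rule exI[of _ u'], rule exI[of _ s'])
           (intro conjI P1 P2 P3 P4)
    qed
  qed
qed

lemma Bp:
  assumes II: IIp and h: "h \<in> Id ar S" "h \<noteq> 0"
  shows "rep h (lead lt h)"
  using Bp_aux[OF II lead_oword[OF Id_opoly[OF h(1)] h(2)]] h by blast

end


context gsl
begin

lemma mapF_id: "mapF (\<lambda>w. w) f = f"
proof (rule poly_mapping_eqI)
  fix k
  show "Poly_Mapping.lookup (mapF (\<lambda>w. w) f) k = Poly_Mapping.lookup f k"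
    unfolding mapF_def lookup_sum lookup_single
    by (cases "k \<in> Poly_Mapping.keys f") (auto simp: when_def in_keys_iff)
qed

lemma rep_in_T:
  assumes r: "rep h B" and Bw: "lt B w" and oB: "oword ar B" and ow: "oword ar w"
  shows "h \<in> T w"
proof -
  obtain n :: nat and \<alpha> u s where r: "\<forall>i < n. star_word ar (u i) \<and> s i \<in> S"
        "h = (\<Sum>i < n. scale (\<alpha> i) (subst_poly (u i) (s i)))"
        "\<forall>i<n. subst (u i) (lead lt (s i)) = B \<or> lt (subst (u i) (lead lt (s i))) B"
    using r unfolding rep_def by blast
  show ?thesis unfolding r(2)
  proof (rule kspan_sum)
    fix i assume "i \<in> {..<n}"
    then have i: "star_word ar (u i)" "s i \<in> S"
      "subst (u i) (lead lt (s i)) = B \<or> lt (subst (u i) (lead lt (s i))) B" using r by auto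
    have oi: "oword ar (subst (u i) (lead lt (s i)))" using gen_star(2)[OF i(1,2)] .
    have "lt (subst (u i) (lead lt (s i))) w"
      using i(3)
    proof
      assume "subst (u i) (lead lt (s i)) = B" then show ?thesis using Bw by simp
    next
      assume "lt (subst (u i) (lead lt (s i))) B" then show ?thesis using trans[OF oi oB ow] Bw by blast
    qed
    then have "subst_poly (u i) (s i) \<in> GS (\<lambda>k. lt k w)"
      using GS_change[OF gen_star(1)[OF i(1,2)], of "\<lambda>k. lt k w"] GS_P[OF gen_star(1)[OF i(1,2)]] by simp
    then show "scale (\<alpha> i) (subst_poly (u i) (s i)) \<in> T w" by (rule kspan_sgen)
  qed
qed

lemma diff_comp:
  assumes II: IIp and g: "g1 \<in> GS (\<lambda>k. k = w)" "g2 \<in> GS (\<lambda>k. k = w)"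
  shows "g1 - g2 \<in> T w"
proof (cases "g1 - g2 = 0")
  case True then show ?thesis by (simp add: kspan.zero)
next
  case False
  have w1: "lead lt g1 = w" "lead lt g2 = w" using GS_P[OF g(1)] GS_P[OF g(2)] by simp_all
  have ow: "oword ar w" using GS_lead_ow[OF g(1)] w1 by simp
  have hId: "g1 - g2 \<in> Id ar S" using GS_Id[OF g(1)] GS_Id[OF g(2)] unfolding Id_eq by (rule kspan_diff)
  have kb: "\<forall>k\<in>Poly_Mapping.keys (g1 - g2). k = w \<or> lt k w"
  proof
    fix k assume "k \<in> Poly_Mapping.keys (g1 - g2)"
    then have "k \<in> Poly_Mapping.keys g1 \<or> k \<in> Poly_Mapping.keys g2" using keys_diff[of g1 g2] by blast
    then show "k = w \<or> lt k w"
    proof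
      assume "k \<in> Poly_Mapping.keys g1"
      from GS_keys[OF g(1) this] show ?thesis using w1 by simp
    next
      assume "k \<in> Poly_Mapping.keys g2"
      from GS_keys[OF g(2) this] show ?thesis using w1 by simp
    qed
  qed
  have l0: "Poly_Mapping.lookup (g1 - g2) w = 0"
    using GS_lc[OF g(1)] GS_lc[OF g(2)] w1 by (simp add: lookup_minus)
  have lw: "lt (lead lt (g1 - g2)) w" using lead_below[OF Id_opoly[OF hId] False ow kb l0] .
  have "rep (g1 - g2) (lead lt (g1 - g2))" using Bp[OF II hId False] .
  from rep_in_T[OF this lw lead_oword[OF Id_opoly[OF hId] False] ow] show ?thesis .
qed

lemma comp1:
  assumes II: IIp and fg: "f \<in> S" "g \<in> S" and ab: "oword ar a" "oword ar b"
    and w: "w = lead lt f @ a" "w = b @ lead lt g"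
  shows "congr_mod ar lt S w (rmul f a - lmul b g) 0"
proof -
  have va: "vctx ar (Hole [] a)" "vctx ar (Hole b [])" using ab by (auto simp: oword_vl)
  have "fill (Hole [] a) = (\<lambda>w. w @ a)" by (simp add: fun_eq_iff)
  then have "rmul f a = mapF (fill (Hole [] a)) f" by (simp add: rmul_mapF)
  then have g1: "rmul f a \<in> GS (\<lambda>k. k = w)"
    using GS_memI[OF isC_fill[OF va(1)] fg(1), of "\<lambda>k. k = w"] w by simp
  have "fill (Hole b []) = (\<lambda>w. b @ w)" by (simp add: fun_eq_iff)
  then have "lmul b g = mapF (fill (Hole b [])) g" by (simp add: lmul_mapF)
  then have g2: "lmul b g \<in> GS (\<lambda>k. k = w)"
    using GS_memI[OF isC_fill[OF va(2)] fg(2), of "\<lambda>k. k = w"] w by simp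
  show ?thesis using diff_comp[OF II g1 g2] by (simp add: congr_eq)
qed

lemma comp2:
  assumes II: IIp and fg: "f \<in> S" "g \<in> S" and u: "star_word ar u" "lead lt f = subst u (lead lt g)"
  shows "congr_mod ar lt S (lead lt f) (f - subst_poly u g) 0"
proof -
  have v0: "vctx ar (Hole [] [])" by simp
  have fe: "fill (Hole [] []) = (\<lambda>w. w)" by (simp add: fun_eq_iff)
  have "f = mapF (fill (Hole [] [])) f" unfolding fe by (rule mapF_id[symmetric])
  then have g1: "f \<in> GS (\<lambda>k. k = lead lt f)"
    using GS_memI[OF isC_fill[OF v0] fg(1), of "\<lambda>k. k = lead lt f"] by simp
  have g2: "subst_poly u g \<in> GS (\<lambda>k. k = lead lt f)" using gen_star(1)[OF u(1) fg(2)] u(2) by simp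
  show ?thesis using diff_comp[OF II g1 g2] by (simp add: congr_eq)
qed

lemma II_I: "IIp \<Longrightarrow> GSB ar lt S"
  unfolding GSB_def using comp1 comp2 by blast

end


context gsl
begin

lemma rep_lead:
  fixes n :: nat and \<alpha> :: "nat \<Rightarrow> 'k"
  assumes f: "f \<in> Id ar S" "f \<noteq> 0"
    and r1: "\<forall>i < n. star_word ar (u i) \<and> s i \<in> S"
    and r2: "f = (\<Sum>i < n. scale (\<alpha> i) (subst_poly (u i) (s i)))"
    and r3: "\<forall>i j. i < j \<and> j < n \<longrightarrow> lt (subst (u j) (lead lt (s j))) (subst (u i) (lead lt (s i)))"
  shows "\<exists>u s. star_word ar u \<and> s \<in> S \<and> lead lt f = subst u (lead lt s)"
proof -
  define w where "w i = subst (u i) (lead lt (s i))" for i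
  define g where "g i = subst_poly (u i) (s i)" for i
  have gG: "g i \<in> GS (\<lambda>k. k = w i)" if "i < n" for i
    using gen_star(1)[of "u i" "s i"] r1 that by (simp add: g_def w_def)
  have ow: "oword ar (w i)" if "i < n" for i
    using gen_star(2)[of "u i" "s i"] r1 that by (simp add: w_def)
  have gl: "Poly_Mapping.lookup (g i) (w i) = 1" if "i < n" for i
    using GS_lc[OF gG[OF that]] GS_P[OF gG[OF that]] by simp
  have gk: "k = w i \<or> lt k (w i)" if "i < n" "k \<in> Poly_Mapping.keys (g i)" for i k
    using GS_keys[OF gG[OF that(1)] that(2)] GS_P[OF gG[OF that(1)]] by simp
  have lf: "Poly_Mapping.lookup f k = (\<Sum>i<n. \<alpha> i * Poly_Mapping.lookup (g i) k)" for k
    unfolding r2 g_def by (simp add: lookup_sum)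
  define I where "I = {i. i < n \<and> \<alpha> i \<noteq> 0}"
  have fI: "finite I" unfolding I_def by simp
  have Ine: "I \<noteq> {}"
  proof
    assume "I = {}"
    then have "\<forall>i<n. \<alpha> i = 0" unfolding I_def by blast
    then have "f = 0" unfolding r2 by simp
    then show False using f(2) by simp
  qed
  define i0 where "i0 = Min I"
  have i0I: "i0 \<in> I" unfolding i0_def using fI Ine by simp
  have i0min: "i0 \<le> i" if "i \<in> I" for i unfolding i0_def using fI that by simp
  have i0n: "i0 < n" using i0I unfolding I_def by simp
  have lower: "lt (w i) (w i0)" if "i \<in> I" "i \<noteq> i0" for i
  proof -
    have "i0 < i" using i0min[OF that(1)] that(2) by simp
    then show ?thesis using r3 that(1) unfolding I_def w_def by blast
  qed
  have zero_other: "\<alpha> i * Poly_Mapping.lookup (g i) (w i0) = 0" if "i \<in> {..<n} - {i0}" for i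
  proof (cases "\<alpha> i = 0")
    case True then show ?thesis by simp
  next
    case False
    then have iI: "i \<in> I" "i \<noteq> i0" "i < n" using that unfolding I_def by auto
    have "Poly_Mapping.lookup (g i) (w i0) = 0"
    proof (rule ccontr)
      assume "Poly_Mapping.lookup (g i) (w i0) \<noteq> 0"
      then have "w i0 \<in> Poly_Mapping.keys (g i)" by (simp add: in_keys_iff)
      then have "w i0 = w i \<or> lt (w i0) (w i)" using gk iI(3) by blast
      moreover have "lt (w i) (w i0)" using lower iI by blast
      ultimately show False using asym[OF ow[OF iI(3)] ow[OF i0n]] irr[OF ow[OF i0n]] by auto
    qed
    then show ?thesis by simp
  qed
  have "Poly_Mapping.lookup f (w i0) = \<alpha> i0 * Poly_Mapping.lookup (g i0) (w i0) + (\<Sum>i\<in>{..<n} - {i0}. \<alpha> i * Poly_Mapping.lookup (g i) (w i0))"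
    unfolding lf using sum.remove[of "{..<n}" i0] i0n by simp
  also have "\<dots> = \<alpha> i0" using zero_other gl[OF i0n] by simp
  finally have lf0: "Poly_Mapping.lookup f (w i0) = \<alpha> i0" .
  have "lead lt f = w i0"
  proof (rule lead_eq)
    show "opoly ar f" using Id_opoly[OF f(1)] .
    show "w i0 \<in> Poly_Mapping.keys f" using lf0 i0I unfolding I_def by (simp add: in_keys_iff)
    show "\<forall>v\<in>Poly_Mapping.keys f. v \<noteq> w i0 \<longrightarrow> lt v (w i0)"
    proof (intro ballI impI)
      fix v assume v: "v \<in> Poly_Mapping.keys f" "v \<noteq> w i0"
      then have "(\<Sum>i<n. \<alpha> i * Poly_Mapping.lookup (g i) v) \<noteq> 0" using lf by (simp add: in_keys_iff)
      then obtain i where i: "i < n" "\<alpha> i * Poly_Mapping.lookup (g i) v \<noteq> 0"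
        by (metis (mono_tags, lifting) lessThan_iff sum.neutral)
      then have iI: "i \<in> I" and vk: "v \<in> Poly_Mapping.keys (g i)" unfolding I_def by (auto simp: in_keys_iff)
      have vw: "v = w i \<or> lt v (w i)" using gk[OF i(1) vk] .
      have ov: "oword ar v" using GS_keys[OF gG[OF i(1)] vk] by blast
      show "lt v (w i0)"
      proof (cases "i = i0")
        case True then show ?thesis using vw v(2) by simp
      next
        case False
        then have l: "lt (w i) (w i0)" using lower iI by blast
        from vw show ?thesis
        proof
          assume "v = w i" then show ?thesis using l by simp
        next
          assume "lt v (w i)" then show ?thesis using trans[OF ov ow[OF i(1)] ow[OF i0n]] l by blast
        qed
      qed
    qed
  qed
  then show ?thesis using r1 i0n unfolding w_def by blast
qed

end


context gsl
begin

lemma Irr_ow: "k \<in> Irr ar lt S \<Longrightarrow> oword ar k"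
  unfolding Irr_def by blast

lemma reduce:
  assumes L: "oword ar L"
  shows "\<forall>f::('x,'o,'k) opoly. opoly ar f \<and> (\<forall>k\<in>Poly_Mapping.keys f. k = L \<or> lt k L) \<longrightarrow>
    (\<exists>g. Poly_Mapping.keys g \<subseteq> Irr ar lt S \<and> f - g \<in> Id ar S \<and> (\<forall>k\<in>Poly_Mapping.keys g. k = L \<or> lt k L))"
proof (rule wf_induct_ow[OF L])
  fix L assume hyp: "oword ar L" and IH: "\<And>V. oword ar V \<Longrightarrow> lt V L \<Longrightarrow>
    \<forall>f::('x,'o,'k) opoly. opoly ar f \<and> (\<forall>k\<in>Poly_Mapping.keys f. k = V \<or> lt k V) \<longrightarrow>
    (\<exists>g. Poly_Mapping.keys g \<subseteq> Irr ar lt S \<and> f - g \<in> Id ar S \<and> (\<forall>k\<in>Poly_Mapping.keys g. k = V \<or> lt k V))"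
  have below: "\<exists>g. Poly_Mapping.keys g \<subseteq> Irr ar lt S \<and> f1 - g \<in> Id ar S \<and> (\<forall>k\<in>Poly_Mapping.keys g. lt k L)"
    if f1: "opoly ar (f1::('x,'o,'k) opoly)" "\<forall>k\<in>Poly_Mapping.keys f1. lt k L" for f1
  proof (cases "f1 = 0")
    case True
    then show ?thesis by (intro exI[of _ 0]) (simp add: Id_eq kspan.zero)
  next
    case False
    have m: "lead lt f1 \<in> Poly_Mapping.keys f1" using lead_props(1)[OF f1(1) False] .
    have ltm: "lt (lead lt f1) L" using f1(2) m by blast
    have om: "oword ar (lead lt f1)" using lead_oword[OF f1(1) False] .
    have kb: "\<forall>k\<in>Poly_Mapping.keys f1. k = lead lt f1 \<or> lt k (lead lt f1)"
      using lead_props(2)[OF f1(1) False] by blast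
    obtain g where g: "Poly_Mapping.keys g \<subseteq> Irr ar lt S" "f1 - g \<in> Id ar S"
      "\<forall>k\<in>Poly_Mapping.keys g. k = lead lt f1 \<or> lt k (lead lt f1)"
      using IH[OF om ltm] f1(1) kb by blast
    have "\<forall>k\<in>Poly_Mapping.keys g. lt k L"
    proof
      fix k assume k: "k \<in> Poly_Mapping.keys g"
      have ok: "oword ar k" using g(1) k Irr_ow by blast
      from g(3) k have "k = lead lt f1 \<or> lt k (lead lt f1)" by blast
      then show "lt k L"
      proof
        assume "k = lead lt f1" then show ?thesis using ltm by simp
      next
        assume "lt k (lead lt f1)" then show ?thesis using trans[OF ok om hyp] ltm by blast
      qed
    qed
    then show ?thesis using g by blast
  qed
  show "\<forall>f::('x,'o,'k) opoly. opoly ar f \<and> (\<forall>k\<in>Poly_Mapping.keys f. k = L \<or> lt k L) \<longrightarrow>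
    (\<exists>g. Poly_Mapping.keys g \<subseteq> Irr ar lt S \<and> f - g \<in> Id ar S \<and> (\<forall>k\<in>Poly_Mapping.keys g. k = L \<or> lt k L))"
  proof (intro allI impI, elim conjE)
    fix f :: "('x,'o,'k) opoly" assume fo: "opoly ar f" and fk: "\<forall>k\<in>Poly_Mapping.keys f. k = L \<or> lt k L"
    define c where "c = Poly_Mapping.lookup f L"
    show "\<exists>g. Poly_Mapping.keys g \<subseteq> Irr ar lt S \<and> f - g \<in> Id ar S \<and> (\<forall>k\<in>Poly_Mapping.keys g. k = L \<or> lt k L)"
    proof (cases "L \<in> Irr ar lt S")
      case True
      define f1 where "f1 = f - Poly_Mapping.single L c"
      have k1: "\<forall>k\<in>Poly_Mapping.keys f1. lt k L"
      proof
        fix k assume k: "k \<in> Poly_Mapping.keys f1"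
        then have "k \<noteq> L" unfolding f1_def c_def by (auto simp: in_keys_iff lookup_minus)
        moreover have "k \<in> Poly_Mapping.keys f" using k unfolding f1_def c_def
          by (auto simp: in_keys_iff lookup_minus lookup_single when_def split: if_splits)
        ultimately show "lt k L" using fk by blast
      qed
      have o1: "opoly ar f1" unfolding opoly_def
      proof
        fix k assume "k \<in> Poly_Mapping.keys f1"
        then have "k \<in> Poly_Mapping.keys f \<or> k = L" unfolding f1_def
          by (auto simp: in_keys_iff lookup_minus lookup_single when_def split: if_splits)
        then show "oword ar k" using fo hyp unfolding opoly_def by blast
      qed
      obtain g1 where g1: "Poly_Mapping.keys g1 \<subseteq> Irr ar lt S" "f1 - g1 \<in> Id ar S" "\<forall>k\<in>Poly_Mapping.keys g1. lt k L"
        using below[OF o1 k1] by blast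
      define g where "g = g1 + Poly_Mapping.single L c"
      have kg: "Poly_Mapping.keys g \<subseteq> Poly_Mapping.keys g1 \<union> {L}"
        unfolding g_def using keys_add[of g1 "Poly_Mapping.single L c"] by (auto split: if_splits)
      have "Poly_Mapping.keys g \<subseteq> Irr ar lt S" using kg g1(1) True by blast
      moreover have "f - g = f1 - g1" unfolding g_def f1_def by simp
      moreover have "\<forall>k\<in>Poly_Mapping.keys g. k = L \<or> lt k L" using kg g1(3) by blast
      ultimately show ?thesis using g1(2) by metis
    next
      case False
      then obtain u s where us: "star_word ar u" "s \<in> S" "L = subst u (lead lt s)"
        using hyp unfolding Irr_def by blast
      define t where "t = subst_poly u s"
      have tG: "t \<in> GS (\<lambda>k. k = L)" using gen_star(1)[OF us(1,2)] us(3) by (simp add: t_def)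
      have tl: "Poly_Mapping.lookup t L = 1" using GS_lc[OF tG] GS_P[OF tG] by simp
      have tk: "\<forall>k\<in>Poly_Mapping.keys t. oword ar k \<and> (k = L \<or> lt k L)"
        using GS_keys[OF tG] GS_P[OF tG] by simp
      define f1 where "f1 = f - scale c t"
      have kk: "k \<in> Poly_Mapping.keys f \<or> k \<in> Poly_Mapping.keys t" if "k \<in> Poly_Mapping.keys f1" for k
        using keys_diff[of f "scale c t"] keys_scale_sub[of c t] that unfolding f1_def by blast
      have k1: "\<forall>k\<in>Poly_Mapping.keys f1. lt k L"
      proof
        fix k assume k: "k \<in> Poly_Mapping.keys f1"
        then have "k \<noteq> L" unfolding f1_def c_def using tl by (auto simp: in_keys_iff lookup_minus)
        moreover have "k = L \<or> lt k L" using kk[OF k] fk tk by blast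
        ultimately show "lt k L" by blast
      qed
      have o1: "opoly ar f1" unfolding opoly_def
      proof
        fix k assume "k \<in> Poly_Mapping.keys f1"
        then show "oword ar k" using kk fo tk unfolding opoly_def by blast
      qed
      obtain g1 where g1: "Poly_Mapping.keys g1 \<subseteq> Irr ar lt S" "f1 - g1 \<in> Id ar S" "\<forall>k\<in>Poly_Mapping.keys g1. lt k L"
        using below[OF o1 k1] by blast
      have "scale c t \<in> Id ar S" using GS_Id[OF tG] unfolding Id_eq by (rule kspan_scale)
      then have "f1 - g1 + scale c t \<in> Id ar S" using g1(2) unfolding Id_eq by (rule kspan_add[rotated])
      moreover have "f1 - g1 + scale c t = f - g1" unfolding f1_def by simp
      ultimately show ?thesis using g1 by metis
    qed
  qed
qed

lemma III1: "opoly ar f \<Longrightarrow> \<exists>g. Poly_Mapping.keys g \<subseteq> Irr ar lt S \<and> f - g \<in> Id ar S"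
proof (cases "f = 0")
  case True then show ?thesis by (intro exI[of _ 0]) (simp add: Id_eq kspan.zero)
next
  case False
  assume fo: "opoly ar f"
  have "\<forall>k\<in>Poly_Mapping.keys f. k = lead lt f \<or> lt k (lead lt f)" using lead_props(2)[OF fo False] by blast
  then show ?thesis using reduce[OF lead_oword[OF fo False]] fo by blast
qed

end


context gsl
begin

definition IIq where
  "IIq \<longleftrightarrow> (\<forall>f \<in> Id ar S. f \<noteq> 0 \<longrightarrow>
               (\<exists>(n::nat) (\<alpha>::nat \<Rightarrow> 'k) u s.
                  (\<forall>i < n. star_word ar (u i) \<and> s i \<in> S) \<and>
                  f = (\<Sum>i < n. scale (\<alpha> i) (subst_poly (u i) (s i))) \<and>
                  (\<forall>i j. i < j \<and> j < n \<longrightarrow>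
                     lt (subst (u j) (lead lt (s j))) (subst (u i) (lead lt (s i))))))"

definition III where
  "III \<longleftrightarrow> ((\<forall>f. opoly ar f \<longrightarrow> (\<exists>g. Poly_Mapping.keys g \<subseteq> Irr ar lt S \<and> f - g \<in> Id ar S)) \<and>
           (\<forall>g. Poly_Mapping.keys g \<subseteq> Irr ar lt S \<and> g \<in> Id ar S \<longrightarrow> g = 0))"

lemma I_iff_II: "GSB ar lt S \<longleftrightarrow> IIp"
  using I_II II_I unfolding IIp_def by blast

lemma II_IIq: "IIp \<Longrightarrow> IIq"
  unfolding IIq_def
proof (intro ballI impI)
  fix f assume II: IIp and f: "f \<in> Id ar S" "f \<noteq> 0"
  from Bp[OF II f] show "\<exists>(n::nat) (\<alpha>::nat \<Rightarrow> 'k) u s.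
                  (\<forall>i < n. star_word ar (u i) \<and> s i \<in> S) \<and>
                  f = (\<Sum>i < n. scale (\<alpha> i) (subst_poly (u i) (s i))) \<and>
                  (\<forall>i j. i < j \<and> j < n \<longrightarrow>
                     lt (subst (u j) (lead lt (s j))) (subst (u i) (lead lt (s i))))"
    unfolding rep_def by blast
qed

lemma IIq_II: "IIq \<Longrightarrow> IIp"
  unfolding IIp_def
proof (intro ballI impI)
  fix f assume II: IIq and f: "f \<in> Id ar S" "f \<noteq> 0"
  then obtain n :: nat and \<alpha> :: "nat \<Rightarrow> 'k" and u s where r:
    "\<forall>i < n. star_word ar (u i) \<and> s i \<in> S"
    "f = (\<Sum>i < n. scale (\<alpha> i) (subst_poly (u i) (s i)))"
    "\<forall>i j. i < j \<and> j < n \<longrightarrow> lt (subst (u j) (lead lt (s j))) (subst (u i) (lead lt (s i)))"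
    unfolding IIq_def by blast
  from rep_lead[OF f r] show "\<exists>u s. star_word ar u \<and> s \<in> S \<and> lead lt f = subst u (lead lt s)" .
qed

lemma II_III: "IIp \<Longrightarrow> III"
  unfolding III_def
proof (intro conjI allI impI)
  fix f :: "('x,'o,'k) opoly" assume "opoly ar f"
  then show "\<exists>g. Poly_Mapping.keys g \<subseteq> Irr ar lt S \<and> f - g \<in> Id ar S" by (rule III1)
next
  fix g :: "('x,'o,'k) opoly" assume II: IIp and g: "Poly_Mapping.keys g \<subseteq> Irr ar lt S \<and> g \<in> Id ar S"
  show "g = 0"
  proof (rule ccontr)
    assume nz: "g \<noteq> 0"
    then obtain u s where us: "star_word ar u" "s \<in> S" "lead lt g = subst u (lead lt s)"
      using II g unfolding IIp_def by blast
    have "lead lt g \<in> Irr ar lt S" using lead_props(1)[OF Id_opoly nz] g by blast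
    then show False using us unfolding Irr_def by blast
  qed
qed

lemma III_II: "III \<Longrightarrow> IIp"
  unfolding IIp_def
proof (intro ballI impI)
  fix f assume III: III and f: "f \<in> Id ar S" "f \<noteq> 0"
  have ind: "\<forall>g. Poly_Mapping.keys g \<subseteq> Irr ar lt S \<and> g \<in> Id ar S \<longrightarrow> g = 0" using III unfolding III_def by blast
  show "\<exists>u s. star_word ar u \<and> s \<in> S \<and> lead lt f = subst u (lead lt s)"
  proof (rule ccontr)
    assume no: "\<not> (\<exists>u s. star_word ar u \<and> s \<in> S \<and> lead lt f = subst u (lead lt s))"
    define W where "W = lead lt f"
    have fo: "opoly ar f" using Id_opoly[OF f(1)] .
    have oW: "oword ar W" unfolding W_def using lead_oword[OF fo f(2)] .
    have WI: "W \<in> Irr ar lt S" unfolding Irr_def W_def using no oW W_def by blast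
    define c where "c = Poly_Mapping.lookup f W"
    have c0: "c \<noteq> 0" unfolding c_def W_def using lead_props(1)[OF fo f(2)] by (simp add: in_keys_iff)
    define f1 where "f1 = f - Poly_Mapping.single W c"
    have k1: "\<forall>k\<in>Poly_Mapping.keys f1. lt k W"
    proof
      fix k assume k: "k \<in> Poly_Mapping.keys f1"
      then have "k \<noteq> W" unfolding f1_def c_def by (auto simp: in_keys_iff lookup_minus)
      moreover have "k \<in> Poly_Mapping.keys f" using k unfolding f1_def c_def
        by (auto simp: in_keys_iff lookup_minus lookup_single when_def split: if_splits)
      ultimately show "lt k W" using lead_props(2)[OF fo f(2)] unfolding W_def by blast
    qed
    have o1: "opoly ar f1" unfolding opoly_def
    proof
      fix k assume "k \<in> Poly_Mapping.keys f1"
      then have "k \<in> Poly_Mapping.keys f \<or> k = W" unfolding f1_def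
        by (auto simp: in_keys_iff lookup_minus lookup_single when_def split: if_splits)
      then show "oword ar k" using fo oW unfolding opoly_def by blast
    qed
    obtain g1 where g1: "Poly_Mapping.keys g1 \<subseteq> Irr ar lt S" "f1 - g1 \<in> Id ar S" "\<forall>k\<in>Poly_Mapping.keys g1. lt k W"
    proof (cases "f1 = 0")
      case True
      show ?thesis by (rule that[of 0]) (use True in \<open>simp_all add: Id_eq kspan.zero\<close>)
    next
      case False
      have m: "lead lt f1 \<in> Poly_Mapping.keys f1" using lead_props(1)[OF o1 False] .
      have ltm: "lt (lead lt f1) W" using k1 m by blast
      have om: "oword ar (lead lt f1)" using lead_oword[OF o1 False] .
      have kb: "\<forall>k\<in>Poly_Mapping.keys f1. k = lead lt f1 \<or> lt k (lead lt f1)"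
        using lead_props(2)[OF o1 False] by blast
      obtain g where g: "Poly_Mapping.keys g \<subseteq> Irr ar lt S" "f1 - g \<in> Id ar S"
        "\<forall>k\<in>Poly_Mapping.keys g. k = lead lt f1 \<or> lt k (lead lt f1)"
        using reduce[OF om] o1 kb by blast
      have "\<forall>k\<in>Poly_Mapping.keys g. lt k W"
      proof
        fix k assume k: "k \<in> Poly_Mapping.keys g"
        have ok: "oword ar k" using g(1) k Irr_ow by blast
        from g(3) k have "k = lead lt f1 \<or> lt k (lead lt f1)" by blast
        then show "lt k W"
        proof
          assume "k = lead lt f1" then show ?thesis using ltm by simp
        next
          assume "lt k (lead lt f1)" then show ?thesis using trans[OF ok om oW] ltm by blast
        qed
      qed
      then show ?thesis using that g by blast
    qed
    define g where "g = g1 + Poly_Mapping.single W c"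
    have gW: "Poly_Mapping.lookup g1 W = 0"
    proof (rule ccontr)
      assume "Poly_Mapping.lookup g1 W \<noteq> 0"
      then have "lt W W" using g1(3) by (simp add: in_keys_iff)
      then show False using irr[OF oW] by blast
    qed
    have "Poly_Mapping.lookup g W = c" unfolding g_def using gW by (simp add: lookup_add)
    then have gnz: "g \<noteq> 0" using c0 by auto
    have kg: "Poly_Mapping.keys g \<subseteq> Poly_Mapping.keys g1 \<union> {W}"
      unfolding g_def using keys_add[of g1 "Poly_Mapping.single W c"] by (auto split: if_splits)
    have gI: "Poly_Mapping.keys g \<subseteq> Irr ar lt S" using kg g1(1) WI by blast
    have "f - (f1 - g1) \<in> Id ar S" using f(1) g1(2) unfolding Id_eq by (rule kspan_diff)
    moreover have "f - (f1 - g1) = g" unfolding g_def f1_def by simp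
    ultimately have "g \<in> Id ar S" by simp
    then show False using ind gI gnz by blast
  qed
qed

lemma final:
  "(GSB ar lt S \<longleftrightarrow> IIp) \<and> (IIp \<longleftrightarrow> IIq) \<and> (IIp \<longleftrightarrow> III)"
  using I_iff_II II_IIq IIq_II II_III III_II by blast

end


theorem theorem3p5:
  fixes ar :: "'o \<Rightarrow> nat"
    and lt :: "('x, 'o) oword \<Rightarrow> ('x, 'o) oword \<Rightarrow> bool"
    and S :: "('x, 'o, 'k::comm_ring_1) opoly set"
  assumes mo: "monomial_ordering ar lt"
    and S_poly: "\<forall>s \<in> S. opoly ar s \<and> monic lt s"
  shows "(GSB ar lt S \<longleftrightarrow>
            (\<forall>f \<in> Id ar S. f \<noteq> 0 \<longrightarrow>
               (\<exists>u s. star_word ar u \<and> s \<in> S \<and> lead lt f = subst u (lead lt s))))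
       \<and> ((\<forall>f \<in> Id ar S. f \<noteq> 0 \<longrightarrow>
               (\<exists>u s. star_word ar u \<and> s \<in> S \<and> lead lt f = subst u (lead lt s)))
          \<longleftrightarrow>
          (\<forall>f \<in> Id ar S. f \<noteq> 0 \<longrightarrow>
               (\<exists>(n::nat) (\<alpha>::nat \<Rightarrow> 'k) u s.
                  (\<forall>i < n. star_word ar (u i) \<and> s i \<in> S) \<and>
                  f = (\<Sum>i < n. scale (\<alpha> i) (subst_poly (u i) (s i))) \<and>
                  (\<forall>i j. i < j \<and> j < n \<longrightarrow>
                     lt (subst (u j) (lead lt (s j))) (subst (u i) (lead lt (s i)))))))
       \<and> ((\<forall>f \<in> Id ar S. f \<noteq> 0 \<longrightarrow>
               (\<exists>u s. star_word ar u \<and> s \<in> S \<and> lead lt f = subst u (lead lt s)))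
          \<longleftrightarrow>
          ((\<forall>f. opoly ar f \<longrightarrow> (\<exists>g. Poly_Mapping.keys g \<subseteq> Irr ar lt S \<and> f - g \<in> Id ar S)) \<and>
           (\<forall>g. Poly_Mapping.keys g \<subseteq> Irr ar lt S \<and> g \<in> Id ar S \<longrightarrow> g = 0)))"
proof -
  interpret g: gsl ar lt S using mo S_poly by (simp add: gsl_def ordl_def gsl_axioms_def)
  show ?thesis using g.final unfolding g.IIp_def g.IIq_def g.III_def .
qed

end
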